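(* For any $\alpha>2$, $q>0$ and $d\geq3$, there is a constant $c=c(\alpha,d,q)>0$ such that if $\varepsilon\le c$, then $$\sup_{x,y\in\mathbb{R}^d}\Pi_{(x,y)}\Big(e^{q\int_0^\infty g(B_s,\widetilde B_s)ds}\Big)\le 2$$ holds for every function $g:\mathbb{R}^d\times\mathbb{R}^d\to\mathbb{R}$ such that $g(x,y)\le\varepsilon(|x-y|^{-\alpha}\wedge1)$ for all $x,y$.
   Context: Under the probability $\Pi_{(x,y)}$, $B_t$ and $\widetilde B_t$ are independent $d$-dimensional standard Brownian motions starting from $x$ and $y$ respectively; $\Pi_{(x,y)}(\cdot)$ also denotes expectation under it. *)

theory Defs
  imports "HOL-Probability.Probability"
begin

definition heat_kernel :: "real \<Rightarrow> 'a::euclidean_space \<Rightarrow> real" where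
  "heat_kernel t z = (2 * pi * t) powr (- real DIM('a) / 2) * exp (- (norm z)\<^sup>2 / (2 * t))"

definition is_BM :: "'w measure \<Rightarrow> (real \<Rightarrow> 'w \<Rightarrow> 'a::euclidean_space) \<Rightarrow> 'a \<Rightarrow> bool" where
  "is_BM M B x \<longleftrightarrow>
     prob_space M \<and>
     (\<forall>t\<ge>0. B t \<in> borel_measurable M) \<and>
     (\<forall>\<omega>\<in>space M. B 0 \<omega> = x \<and> continuous_on {0..} (\<lambda>t. B t \<omega>)) \<and>
     (\<forall>(n::nat) (t::nat \<Rightarrow> real). t 0 = 0 \<and> (\<forall>i<n. t i < t (Suc i)) \<longrightarrow>
        prob_space.indep_vars M (\<lambda>_. borel) (\<lambda>i \<omega>. B (t (Suc i)) \<omega> - B (t i) \<omega>) {..<n} \<and>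
        (\<forall>i<n. distr M borel (\<lambda>\<omega>. B (t (Suc i)) \<omega> - B (t i) \<omega>)
                = density lborel (\<lambda>z. ennreal (heat_kernel (t (Suc i) - t i) z))))"

definition indep_processes :: "'w measure \<Rightarrow> (real \<Rightarrow> 'w \<Rightarrow> 'a::euclidean_space) \<Rightarrow> (real \<Rightarrow> 'w \<Rightarrow> 'a) \<Rightarrow> bool" where
  "indep_processes M B B' \<longleftrightarrow>
     prob_space.indep_var M
       (Pi\<^sub>M {0..} (\<lambda>_. borel)) (\<lambda>\<omega>. restrict (\<lambda>t. B t \<omega>) {0..})
       (Pi\<^sub>M {0..} (\<lambda>_. borel)) (\<lambda>\<omega>. restrict (\<lambda>t. B' t \<omega>) {0..})"

definition ext_integral_0_inf :: "(real \<Rightarrow> real) \<Rightarrow> ereal" where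
  "ext_integral_0_inf f =
     enn2ereal (\<integral>\<^sup>+ s. ennreal (max (f s) 0) * indicator {0..} s \<partial>lborel)
   - enn2ereal (\<integral>\<^sup>+ s. ennreal (max (- f s) 0) * indicator {0..} s \<partial>lborel)"

definition ereal_exp :: "ereal \<Rightarrow> ennreal" where
  "ereal_exp r = (case r of ereal a \<Rightarrow> ennreal (exp a) | PInfty \<Rightarrow> \<top> | MInfty \<Rightarrow> 0)"

end

theory Submission
  imports Defs "HOL-Analysis.Analysis"
begin


definition hb :: "real \<Rightarrow> 'a::euclidean_space \<Rightarrow> real" where
  "hb \<beta> z = (max 1 (norm z)) powr (-\<beta>)"

lemma hb_nonneg: "0 \<le> hb \<beta> z" by (simp add: hb_def)

lemma hb_le1: "0 \<le> \<beta> \<Longrightarrow> hb \<beta> z \<le> 1"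
proof -
  assume "0 \<le> \<beta>"
  then have "1 \<le> max 1 (norm z) powr \<beta>" by (intro ge_one_powr_ge_zero) auto
  then have "inverse (max 1 (norm z) powr \<beta>) \<le> 1"
    by (metis inverse_1 le_imp_inverse_le zero_less_one)
  then show ?thesis unfolding hb_def by (simp add: powr_minus)
qed

lemma hb_cont: "continuous_on UNIV (hb \<beta> :: 'a::euclidean_space \<Rightarrow> real)"
  unfolding hb_def by (intro continuous_intros) auto

lemma hb_meas[measurable]: "hb \<beta> \<in> borel_measurable borel"
  using hb_cont borel_measurable_continuous_onI by blast

lemma cball_borel[measurable]: "cball (c::'a::euclidean_space) r \<in> sets borel"
  by (simp add: borel_closed)

lemma ennreal_term_le_suminf: "(f k::ennreal) \<le> (\<Sum>i. f i)"
  using sum_le_suminf[of f "{k}"] by (simp add: summableI)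

lemma p2: "(2::real)^n = 2 powr (real n)" by (simp add: powr_realpow)
lemma A1: fixes \<rho> \<beta> :: real assumes "\<rho> > 0"
  shows "(\<rho> / 2^(k+1)) powr (-\<beta>) = \<rho> powr (-\<beta>) * 2 powr ((real k + 1) * \<beta>)"
proof -
  have "(\<rho> / 2^(k+1)) powr (-\<beta>) = \<rho> powr (-\<beta>) / (2^(k+1)) powr (-\<beta>)"
    by (rule powr_divide)
  also have "(2^(k+1)::real) powr (-\<beta>) = (2 powr real (k+1)) powr (-\<beta>)" by (simp only: p2)
  also have "\<dots> = 2 powr (real (k+1) * (-\<beta>))" by (rule powr_powr)
  also have "\<dots> = inverse (2 powr ((real k + 1) * \<beta>))"
    by (subst powr_minus[symmetric]) (rule arg_cong[where f="\<lambda>x. 2 powr x"], simp add: algebra_simps)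
  finally show ?thesis by (simp only: divide_inverse inverse_inverse_eq)
qed
lemma A2: fixes \<rho> :: real and D :: nat assumes "\<rho> > 0"
  shows "(\<rho> / 2^k) ^ D = \<rho> powr (real D) * 2 powr (- (real k * real D))"
proof -
  have "(\<rho> / 2^k) ^ D = (\<rho> / 2^k) powr (real D)" using assms by (subst powr_realpow) auto
  also have "\<dots> = \<rho> powr (real D) / (2^k) powr (real D)" by (rule powr_divide)
  also have "(2^k::real) powr (real D) = (2 powr (real k)) powr (real D)" by (simp only: p2)
  also have "\<dots> = 2 powr (real k * real D)" by (rule powr_powr)
  finally show ?thesis by (simp only: divide_inverse powr_minus)
qed
lemma A3: "(2 powr (\<beta> - d))^k = 2 powr (real k*\<beta>) * 2 powr (-(real k*d))"
proof -
  have "(2 powr (\<beta> - d))^k = 2 powr (real k * (\<beta> - d))" by (rule powr_power) simp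
  also have "\<dots> = 2 powr (real k*\<beta> + (-(real k*d)))" by (simp add: algebra_simps)
  finally show ?thesis by (simp only: powr_add)
qed

lemma two_powr_lt1: "x < 0 \<Longrightarrow> 2 powr x < (1::real)"
  using powr_less_mono[of x 0 "2::real"] by simp

lemma shell_bound:
  fixes c :: "'a::euclidean_space" and \<beta> \<rho> :: real
  assumes b0: "0 < \<beta>" and bd: "\<beta> < real DIM('a)" and \<rho>: "\<rho> > 0"
  shows "(\<integral>\<^sup>+w. indicator (cball c \<rho>) w * ennreal (norm (w - c) powr (-\<beta>)) \<partial>lborel)
     \<le> ennreal (2 powr \<beta> * unit_ball_vol (DIM('a)) / (1 - 2 powr (\<beta> - DIM('a))) * \<rho> powr (DIM('a) - \<beta>))"
proof -
  define d where "d = real DIM('a)"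
  define a where "a = (\<lambda>k::nat. (\<rho> / 2^(k+1)) powr (-\<beta>))"
  have pw: "indicator (cball c \<rho>) w * ennreal (norm (w - c) powr (-\<beta>))
      \<le> (\<Sum>k. ennreal (a k) * indicator (cball c (\<rho> / 2^k)) w)" for w
  proof (cases "w \<in> cball c \<rho> \<and> w \<noteq> c")
    case False
    then show ?thesis by (auto simp: indicator_def)
  next
    case True
    define r where "r = norm (w - c)"
    have r0: "r > 0" "r \<le> \<rho>" using True by (auto simp: r_def dist_norm norm_minus_commute)
    have "\<exists>n. (1/2::real)^n < r / \<rho>"
      by (rule real_arch_pow_inv) (use r0 \<rho> in auto)
    then obtain n where n: "(1/2::real)^n < r / \<rho>" by blast
    have "\<rho> / 2^(n+1) < r"
    proof -
      have "\<rho> / 2^(n+1) \<le> \<rho> / 2^n" using \<rho> by (simp add: frac_le)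
      also have "\<rho> / 2^n = \<rho> * (1/2)^n" by (simp add: power_one_over)
      also have "\<dots> < \<rho> * (r / \<rho>)" using n \<rho> by (intro mult_strict_left_mono) auto
      finally show ?thesis using \<rho> by simp
    qed
    then have "\<exists>n. \<rho> / 2^(n+1) < r" by blast
    then obtain k where k1: "\<rho> / 2^(k+1) < r" and k2: "\<And>j. j < k \<Longrightarrow> \<not> \<rho> / 2^(j+1) < r"
      using exists_least_iff[of "\<lambda>n. \<rho> / 2^(n+1) < r"] by blast
    have k3: "r \<le> \<rho> / 2^k"
    proof (cases k)
      case 0 then show ?thesis using r0 by simp
    next
      case (Suc j) then show ?thesis using k2[of j] by auto
    qed
    have "norm (w - c) powr (-\<beta>) \<le> a k"
      unfolding a_def r_def[symmetric] using k1 b0 \<rho> by (intro powr_mono2') auto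
    then have "indicator (cball c \<rho>) w * ennreal (norm (w - c) powr (-\<beta>))
        \<le> ennreal (a k) * indicator (cball c (\<rho> / 2^k)) w"
      using True k3 by (auto simp: indicator_def r_def dist_norm norm_minus_commute intro: ennreal_leI)
    also have "\<dots> \<le> (\<Sum>k. ennreal (a k) * indicator (cball c (\<rho> / 2^k)) w)"
      by (rule ennreal_term_le_suminf)  
    finally show ?thesis .
  qed
  have "(\<integral>\<^sup>+w. indicator (cball c \<rho>) w * ennreal (norm (w - c) powr (-\<beta>)) \<partial>lborel)
      \<le> (\<integral>\<^sup>+w. (\<Sum>k. ennreal (a k) * indicator (cball c (\<rho> / 2^k)) w) \<partial>lborel)"
    by (intro nn_integral_mono pw)
  also have "\<dots> = (\<Sum>k. \<integral>\<^sup>+w. ennreal (a k) * indicator (cball c (\<rho> / 2^k)) w \<partial>lborel)"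
    by (intro nn_integral_suminf) auto
  also have "\<dots> = (\<Sum>k. ennreal (a k * (unit_ball_vol d * (\<rho> / 2^k) ^ DIM('a))))"
    using \<rho> by (simp add: nn_integral_cmult_indicator emeasure_cball d_def ennreal_mult a_def)
  also have "\<dots> = (\<Sum>k. ennreal (2 powr \<beta> * unit_ball_vol d * \<rho> powr (d - \<beta>) * (2 powr (\<beta> - d))^k))"
  proof -
    have "a k * (unit_ball_vol d * (\<rho> / 2^k) ^ DIM('a)) = 2 powr \<beta> * unit_ball_vol d * \<rho> powr (d - \<beta>) * (2 powr (\<beta> - d))^k" for k
    proof -
      have e1: "2 powr ((real k + 1) * \<beta>) = 2 powr (real k * \<beta>) * 2 powr \<beta>"
      proof -
        have "2 powr ((real k + 1) * \<beta>) = 2 powr (real k * \<beta> + \<beta>)" by (simp add: algebra_simps)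
        then show ?thesis by (simp only: powr_add)
      qed
      have e2: "\<rho> powr (d - \<beta>) = \<rho> powr d * \<rho> powr (-\<beta>)"
      proof -
        have "\<rho> powr (d - \<beta>) = \<rho> powr (d + (-\<beta>))" by simp
        then show ?thesis by (simp only: powr_add)
      qed
      show ?thesis unfolding a_def A1[OF \<rho>] A2[OF \<rho>] A3 e1 e2 d_def by (simp add: algebra_simps e2[unfolded d_def])

    qed
    note eq = this
    show ?thesis by (rule suminf_cong, rule arg_cong[where f=ennreal], rule eq)
  qed
  also have "\<dots> = ennreal (\<Sum>k. 2 powr \<beta> * unit_ball_vol d * \<rho> powr (d - \<beta>) * (2 powr (\<beta> - d))^k)"
  proof (rule suminf_ennreal2)
    show "summable (\<lambda>k. 2 powr \<beta> * unit_ball_vol d * \<rho> powr (d - \<beta>) * (2 powr (\<beta> - d))^k)"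
      using bd two_powr_lt1[of "\<beta> - d"] by (intro summable_mult summable_geometric) (auto simp: d_def)
  qed (auto simp: d_def)
  also have "\<dots> = ennreal (2 powr \<beta> * unit_ball_vol d * \<rho> powr (d - \<beta>) / (1 - 2 powr (\<beta> - d)))"
  proof -
    have lt: "norm (2 powr (\<beta> - d)) < 1" using bd two_powr_lt1[of "\<beta> - d"] by (simp add: d_def)
    show ?thesis using suminf_mult[OF summable_geometric[OF lt], of "2 powr \<beta> * unit_ball_vol d * \<rho> powr (d - \<beta>)"]
      suminf_geometric[OF lt] by (simp add: divide_inverse)
  qed
  finally show ?thesis by (simp add: d_def field_simps)
qed

definition CBc :: "real \<Rightarrow> real \<Rightarrow> real" where
  "CBc \<beta> d = 2 powr \<beta> * unit_ball_vol d / (1 - 2 powr (\<beta> - d))"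

lemma CBc_nonneg: "\<beta> < d \<Longrightarrow> 0 \<le> d \<Longrightarrow> 0 \<le> CBc \<beta> d"
  unfolding CBc_def using two_powr_lt1[of "\<beta> - d"] by (auto intro!: divide_nonneg_pos)

definition C2c :: "real \<Rightarrow> real \<Rightarrow> real" where
  "C2c \<beta> d = (2 * pi) powr (- d / 2) * CBc \<beta> d + 1"

lemma heat_kernel_le:
  assumes "s > 0"
  shows "heat_kernel s (z::'a::euclidean_space) \<le> (2 * pi * s) powr (- real DIM('a) / 2)"
  unfolding heat_kernel_def
  by (rule mult_left_le) (use assms in \<open>auto intro!: divide_nonneg_pos\<close>)

lemma heat_kernel_nonneg: "0 \<le> heat_kernel s z"
  unfolding heat_kernel_def by simp

lemma heat_kernel_meas[measurable]: "heat_kernel s \<in> borel_measurable borel"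
  unfolding heat_kernel_def by measurable

lemma gauss_bound:
  fixes v :: "'a::euclidean_space" and s \<beta> :: real
  assumes s: "s > 0" and b0: "0 < \<beta>" and bd: "\<beta> < real DIM('a)"
    and norm1: "(\<integral>\<^sup>+z. ennreal (heat_kernel s (z::'a)) \<partial>lborel) = 1"
  shows "(\<integral>\<^sup>+z. ennreal (heat_kernel s z) * ennreal (hb \<beta> (v + z)) \<partial>lborel)
     \<le> ennreal (C2c \<beta> DIM('a) * s powr (-\<beta>/2))"
proof -
  define d where "d = real DIM('a)"
  define R where "R = s powr (1/2)"
  have R: "R > 0" using s by (simp add: R_def)
  define P where "P = (2 * pi * s) powr (- d / 2)"
  have P: "P \<ge> 0" by (simp add: P_def)
  have pw: "ennreal (heat_kernel s z) * ennreal (hb \<beta> (v + z))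
     \<le> ennreal P * (indicator (cball (-v) R) z * ennreal (norm (z - (-v)) powr (-\<beta>)))
       + ennreal (heat_kernel s z) * ennreal (R powr (-\<beta>))" if z: "z \<noteq> -v" for z
  proof (cases "norm (v + z) \<le> R")
    case True
    have nz: "norm (v + z) > 0" using z by (auto simp: add_eq_0_iff)
    have "hb \<beta> (v + z) \<le> norm (v + z) powr (-\<beta>)"
      unfolding hb_def using b0 nz by (intro powr_mono2') auto
    moreover have "heat_kernel s z \<le> P" unfolding P_def d_def by (rule heat_kernel_le[OF s])
    ultimately have "heat_kernel s z * hb \<beta> (v + z) \<le> P * norm (v + z) powr (-\<beta>)"
      by (intro mult_mono) (auto simp: heat_kernel_nonneg hb_nonneg P)
    then have "ennreal (heat_kernel s z) * ennreal (hb \<beta> (v + z)) \<le> ennreal P * ennreal (norm (v + z) powr (-\<beta>))"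
      by (simp add: ennreal_mult'[symmetric] heat_kernel_nonneg ennreal_leI P)
    also have "\<dots> = ennreal P * (indicator (cball (-v) R) z * ennreal (norm (z - (-v)) powr (-\<beta>)))"
      using True by (simp add: indicator_def dist_norm add.commute norm_minus_commute[of "-v" z])
    finally show ?thesis by (rule order_trans) simp
  next
    case False
    have "hb \<beta> (v + z) \<le> R powr (-\<beta>)"
      unfolding hb_def using b0 R False by (intro powr_mono2') auto
    then have "ennreal (heat_kernel s z) * ennreal (hb \<beta> (v + z)) \<le> ennreal (heat_kernel s z) * ennreal (R powr (-\<beta>))"
      by (intro mult_left_mono ennreal_leI) auto
    then show ?thesis by (rule order_trans) simp
  qed
  have "(\<integral>\<^sup>+z. ennreal (heat_kernel s z) * ennreal (hb \<beta> (v + z)) \<partial>lborel)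
     \<le> (\<integral>\<^sup>+z. ennreal P * (indicator (cball (-v) R) z * ennreal (norm (z - (-v)) powr (-\<beta>)))
       + ennreal (heat_kernel s z) * ennreal (R powr (-\<beta>)) \<partial>lborel)"
    by (intro nn_integral_mono_AE) (use AE_lborel_singleton[of "-v"] pw in \<open>auto elim!: AE_mp\<close>)
  also have "\<dots> = ennreal P * (\<integral>\<^sup>+z. indicator (cball (-v) R) z * ennreal (norm (z - (-v)) powr (-\<beta>)) \<partial>lborel)
       + (\<integral>\<^sup>+z. ennreal (heat_kernel s (z::'a)) \<partial>lborel) * ennreal (R powr (-\<beta>))"
  proof -
    have m1: "(\<lambda>z. ennreal P * (indicator (cball (-v) R) z * ennreal (norm (z - (-v)) powr (-\<beta>)))) \<in> borel_measurable lborel"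
      by measurable
    have m2: "(\<lambda>z. ennreal (heat_kernel s z) * ennreal (R powr (-\<beta>))) \<in> borel_measurable lborel"
      by measurable
    have m3: "(\<lambda>z. (indicator (cball (-v) R) z * ennreal (norm (z - (-v)) powr (-\<beta>)))) \<in> borel_measurable lborel"
      by measurable
    have m4: "(\<lambda>z. ennreal (heat_kernel s (z::'a))) \<in> borel_measurable lborel"
      by measurable
    show ?thesis
      by (simp only: nn_integral_add[OF m1 m2] nn_integral_cmult[OF m3] nn_integral_multc[OF m4])
  qed
  also have "\<dots> \<le> ennreal P * ennreal (CBc \<beta> d * R powr (d - \<beta>)) + 1 * ennreal (R powr (-\<beta>))"
    unfolding norm1 using shell_bound[OF b0 bd R, of "-v"]
    by (intro add_mono mult_left_mono) (auto simp: CBc_def d_def norm1)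
  also have "\<dots> = ennreal (P * (CBc \<beta> d * R powr (d - \<beta>)) + R powr (-\<beta>))"
  proof -
    have X: "0 \<le> CBc \<beta> d * R powr (d - \<beta>)" using CBc_nonneg[of \<beta> d] bd by (simp add: d_def)
    show ?thesis
      by (simp only: mult_1 ennreal_mult'[OF P, symmetric] ennreal_plus[OF mult_nonneg_nonneg[OF P X] powr_ge_zero])
  qed
  also have "P * (CBc \<beta> d * R powr (d - \<beta>)) + R powr (-\<beta>) = C2c \<beta> d * s powr (-\<beta>/2)"
  proof -
    have "R powr (d - \<beta>) = s powr ((d - \<beta>)/2)" "R powr (-\<beta>) = s powr (-\<beta>/2)"
      unfolding R_def powr_powr by simp_all
    moreover have "P = (2 * pi) powr (- d / 2) * s powr (- d / 2)"
      unfolding P_def by (rule powr_mult)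
    moreover have "s powr (- d / 2) * s powr ((d - \<beta>)/2) = s powr (-\<beta>/2)"
    proof -
      have "s powr (- d / 2) * s powr ((d - \<beta>)/2) = s powr (- d / 2 + (d - \<beta>)/2)" by (simp only: powr_add)
      also have "- d / 2 + (d - \<beta>)/2 = -\<beta>/2" by (simp add: field_simps)
      finally show ?thesis .
    qed
    ultimately show ?thesis unfolding C2c_def by (simp add: algebra_simps)
  qed
  finally show ?thesis by (simp add: d_def)
qed


definition phi :: "real \<Rightarrow> real \<Rightarrow> real \<Rightarrow> real" where
  "phi \<beta> d s = (if s \<le> 1 then 1 else C2c \<beta> d * s powr (-\<beta>/2))"

definition Kc :: "real \<Rightarrow> real \<Rightarrow> real" where
  "Kc \<beta> d = 1 + C2c \<beta> d / (\<beta>/2 - 1)"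

lemma C2c_nonneg: "\<beta> < d \<Longrightarrow> 0 \<le> d \<Longrightarrow> 0 \<le> C2c \<beta> d"
  unfolding C2c_def using CBc_nonneg[of \<beta> d] by simp

lemma phi_nonneg: "\<beta> < d \<Longrightarrow> 0 \<le> d \<Longrightarrow> 0 \<le> phi \<beta> d s"
  unfolding phi_def using C2c_nonneg[of \<beta> d] by simp

lemma Kc_pos: "2 < \<beta> \<Longrightarrow> \<beta> < d \<Longrightarrow> 0 < Kc \<beta> d"
  unfolding Kc_def using C2c_nonneg[of \<beta> d] by (simp add: add_pos_nonneg)

lemma phi_bound:
  fixes v :: "'a::euclidean_space" and s \<beta> :: real
  assumes s: "s > 0" and b0: "0 < \<beta>" and bd: "\<beta> < real DIM('a)"
    and norm1: "(\<integral>\<^sup>+z. ennreal (heat_kernel s (z::'a)) \<partial>lborel) = 1"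
  shows "(\<integral>\<^sup>+z. ennreal (heat_kernel s z) * ennreal (hb \<beta> (v + z)) \<partial>lborel)
     \<le> ennreal (phi \<beta> DIM('a) s)"
proof (cases "s \<le> 1")
  case True
  have "(\<integral>\<^sup>+z. ennreal (heat_kernel s z) * ennreal (hb \<beta> (v + z)) \<partial>lborel)
     \<le> (\<integral>\<^sup>+z. ennreal (heat_kernel s (z::'a)) \<partial>lborel)"
    using hb_le1[of \<beta>] hb_nonneg[of \<beta>] b0 by (intro nn_integral_mono) (auto intro!: mult_right_le_one_le ennreal_leI
       simp: ennreal_mult'[symmetric] heat_kernel_nonneg intro: mult_left_le ennreal_leI)
  then show ?thesis using True by (simp add: norm1 phi_def)
next
  case False
  then show ?thesis using gauss_bound[OF s b0 bd norm1, of v] by (simp add: phi_def)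
qed

lemma K_bound:
  assumes b: "2 < \<beta>" "\<beta> < d"
  shows "(\<integral>\<^sup>+s. ennreal (phi \<beta> d s) * indicator {0..} s \<partial>lborel) \<le> ennreal (Kc \<beta> d)"
proof -
  have C: "0 \<le> C2c \<beta> d" using C2c_nonneg[of \<beta> d] b by simp
  have pw: "ennreal (phi \<beta> d s) * indicator {0..} s \<le> indicator {0..1} s
     + ennreal (C2c \<beta> d) * ennreal (indicator {1..} s * s powr (-\<beta>/2))" for s :: real
    using C by (auto simp: phi_def indicator_def ennreal_mult'[symmetric] intro: ennreal_leI)
  have "(\<integral>\<^sup>+s. ennreal (phi \<beta> d s) * indicator {0..} s \<partial>lborel)
     \<le> (\<integral>\<^sup>+s. indicator {0..1} s + ennreal (C2c \<beta> d) * ennreal (indicator {1..} s * s powr (-\<beta>/2)) \<partial>lborel)"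
    by (intro nn_integral_mono pw)
  also have "\<dots> = (\<integral>\<^sup>+s. indicator {0..1::real} s \<partial>lborel)
      + ennreal (C2c \<beta> d) * (\<integral>\<^sup>+s. ennreal (indicator {1..} s * s powr (-\<beta>/2)) \<partial>lborel)"
    by (subst nn_integral_add) (auto simp: nn_integral_cmult)
  also have "(\<integral>\<^sup>+s. ennreal (indicator {1..} s * s powr (-\<beta>/2)) \<partial>lborel) = ennreal (1 / (\<beta>/2 - 1))"
  proof -
    have "((\<lambda>x. x powr (-\<beta>/2)) has_integral - (1 powr (-\<beta>/2 + 1)) / (-\<beta>/2 + 1)) {1..}"
      by (rule has_integral_powr_to_inf) (use b in auto)
    moreover have "- (1 powr (-\<beta>/2 + 1)) / (-\<beta>/2 + 1) = 1 / (\<beta>/2 - 1)"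
    proof -
      have e: "-\<beta>/2 + 1 = -(\<beta>/2 - 1)" by simp
      show ?thesis unfolding e powr_one_eq_one by (simp only: divide_minus_right minus_minus minus_divide_left)
    qed
    ultimately have "((\<lambda>x. x powr (-\<beta>/2)) has_integral 1 / (\<beta>/2 - 1)) {1..}" by simp
    from nn_integral_has_integral_lebesgue[OF _ this] show ?thesis
      by simp
  qed
  also have "(\<integral>\<^sup>+s. indicator {0..1::real} s \<partial>lborel) = 1" by simp
  also have "1 + ennreal (C2c \<beta> d) * ennreal (1 / (\<beta>/2 - 1)) = ennreal (Kc \<beta> d)"
  proof -
    have X: "0 \<le> C2c \<beta> d * (1 / (\<beta>/2 - 1))" using b C by simp
    have "1 + ennreal (C2c \<beta> d) * ennreal (1 / (\<beta>/2 - 1)) = ennreal 1 + ennreal (C2c \<beta> d * (1 / (\<beta>/2 - 1)))"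
      by (simp only: ennreal_mult'[OF C, symmetric] ennreal_1)
    also have "\<dots> = ennreal (1 + C2c \<beta> d * (1 / (\<beta>/2 - 1)))"
      by (rule ennreal_plus[symmetric]) (use X in auto)
    finally show ?thesis by (simp add: Kc_def)
  qed
  finally show ?thesis .
qed


lemma ennreal_mult_indicator: "ennreal (r * indicator A x) = ennreal r * indicator A x"
  by (simp add: indicator_def)

lemma SUP_power_incseq:
  fixes a :: "nat \<Rightarrow> ennreal"
  assumes inc: "incseq a"
  shows "(SUP i. a i) ^ m = (SUP i. a i ^ m)"
proof (induction m)
  case 0 then show ?case by simp
next
  case (Suc m)
  have "(SUP i. a i) ^ Suc m = (SUP j. a j) * (SUP i. a i ^ m)" using Suc by simp
  also have "\<dots> = (SUP i. SUP j. a j * a i ^ m)"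
    by (simp add: SUP_mult_left_ennreal SUP_mult_right_ennreal)
  also have "\<dots> = (SUP j. SUP i. a j * a i ^ m)"
    by (rule SUP_commute)
  also have "\<dots> = (SUP i. a i ^ Suc m)"
  proof (rule antisym)
    show "(SUP j. SUP i. a j * a i ^ m) \<le> (SUP i. a i ^ Suc m)"
    proof (intro SUP_least)
      fix i j
      have "a j * a i ^ m \<le> a (max i j) * a (max i j) ^ m"
        using inc by (intro mult_mono power_mono_ennreal) (auto simp: incseq_def)
      also have "\<dots> = a (max i j) ^ Suc m" by simp
      also have "\<dots> \<le> (SUP i. a i ^ Suc m)" by (rule SUP_upper) simp
      finally show "a j * a i ^ m \<le> (SUP i. a i ^ Suc m)" .
    qed
    show "(SUP i. a i ^ Suc m) \<le> (SUP j. SUP i. a j * a i ^ m)"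
    proof (intro SUP_least)
      fix i
      have "a i ^ Suc m = a i * a i ^ m" by simp
      also have "\<dots> \<le> (SUP i'. a i * a i' ^ m)" by (rule SUP_upper) simp
      also have "\<dots> \<le> (SUP j. SUP i'. a j * a i' ^ m)" by (rule SUP_upper) simp
      finally show "a i ^ Suc m \<le> (SUP j. SUP i. a j * a i ^ m)" .
    qed
  qed
  finally show ?case .
qed

lemma SUP_indicator_interval:
  "(SUP k::nat. indicator {u..u + real k} s :: ennreal) = indicator {u..} (s::real)"
proof (cases "u \<le> s")
  case True
  have "indicator {u..u + real (nat \<lceil>s - u\<rceil>)} s = (1::ennreal)"
    using True by (auto simp: indicator_def) linarith
  then have "(1::ennreal) \<le> (SUP k::nat. indicator {u..u + real k} s)"
    by (metis (mono_tags, lifting) SUP_upper UNIV_I)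
  moreover have "(SUP k::nat. indicator {u..u + real k} s :: ennreal) \<le> 1"
    by (intro SUP_least) (auto simp: indicator_def)
  ultimately show ?thesis using True by (simp add: indicator_def antisym)
qed (simp add: indicator_def)

lemma pathwise_bound:
  fixes f :: "real \<Rightarrow> real"
  assumes cont: "continuous_on UNIV f" and nn: "\<And>s. 0 \<le> f s"
  defines "F \<equiv> \<lambda>u. \<integral>\<^sup>+s. ennreal (f s) * indicator {u..} s \<partial>lborel"
  shows "F u ^ Suc n \<le> ennreal (real (Suc n)) * (\<integral>\<^sup>+r. ennreal (f r) * F r ^ n * indicator {u..} r \<partial>lborel)"
proof -
  have fm[measurable]: "f \<in> borel_measurable borel"
    using cont borel_measurable_continuous_onI by blast
  have Fm[measurable]: "F \<in> borel_measurable borel"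
  proof -
    have "(\<lambda>p::real\<times>real. ennreal (f (snd p)) * indicator {fst p..} (snd p)) = (\<lambda>p. if fst p \<le> snd p then ennreal (f (snd p)) else 0)"
      by (auto simp: indicator_def fun_eq_iff)
    moreover have "(\<lambda>p::real\<times>real. if fst p \<le> snd p then ennreal (f (snd p)) else 0) \<in> borel_measurable (borel \<Otimes>\<^sub>M lborel)"
      by measurable
    ultimately have "(\<lambda>p::real\<times>real. ennreal (f (snd p)) * indicator {fst p..} (snd p)) \<in> borel_measurable (borel \<Otimes>\<^sub>M lborel)"
      by simp
    then have "case_prod (\<lambda>r s. ennreal (f s) * indicator {r..} s) \<in> borel_measurable (borel \<Otimes>\<^sub>M lborel)"
      by (simp add: case_prod_beta')
    from lborel.borel_measurable_nn_integral[OF this] show ?thesis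
      unfolding F_def by simp
  qed
  let ?R = "ennreal (real (Suc n)) * (\<integral>\<^sup>+r. ennreal (f r) * F r ^ n * indicator {u..} r \<partial>lborel)"
  define G where "G = (\<lambda>T r. integral {r..T} f)"
  have cT: "continuous_on {a..b} f" for a b using cont by (rule continuous_on_subset) auto
  have intT: "(f has_integral G T r) {r..T}" for T r
    unfolding G_def by (intro integrable_integral integrable_continuous_interval cT)
  have GF: "ennreal (G T r) \<le> F r" for T r
  proof -
    have "ennreal (G T r) = (\<integral>\<^sup>+s. ennreal (indicator {r..T} s * f s) \<partial>lborel)"
      by (rule nn_integral_has_integral_lebesgue[OF _ intT, symmetric]) (simp add: nn)
    also have "\<dots> \<le> F r" unfolding F_def
      by (intro nn_integral_mono) (auto simp: indicator_def nn)
    finally show ?thesis .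
  qed
  have fin: "ennreal (G T u) ^ Suc n \<le> ?R" if T: "u \<le> T" for T
  proof -
    define P where "P = (\<lambda>r. - ((integral {u..T} f - integral {u..r} f) ^ (Suc n)))"
    define p where "p = (\<lambda>r. real (Suc n) * f r * G T r ^ n)"
    have Geq: "G T r = integral {u..T} f - integral {u..r} f" if "r \<in> {u..T}" for r
    proof -
      have "integral {u..r} f + integral {r..T} f = integral {u..T} f"
        using that by (intro Henstock_Kurzweil_Integration.integral_combine) (auto intro!: integrable_continuous_interval cT)
      then show ?thesis unfolding G_def by simp
    qed
    have "(p has_integral P T - P u) {u..T}"
    proof (rule fundamental_theorem_of_calculus[OF T])
      fix x assume x: "x \<in> {u..T}"
      have d: "((\<lambda>r. integral {u..r} f) has_real_derivative f x) (at x within {u..T})"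
        using integral_has_vector_derivative[OF cT x] by (simp add: has_real_derivative_iff_has_vector_derivative)
      have "(P has_real_derivative p x) (at x within {u..T})"
        unfolding P_def p_def Geq[OF x]
        by (rule derivative_eq_intros d refl | simp)+
      then show "(P has_vector_derivative p x) (at x within {u..T})"
        by (simp add: has_real_derivative_iff_has_vector_derivative)
    qed
    moreover have "P T - P u = G T u ^ Suc n"
      using T by (simp add: P_def G_def)
    ultimately have pint: "(p has_integral G T u ^ Suc n) {u..T}" by simp
    have pnn: "0 \<le> p r" if "r \<in> {u..T}" for r
    proof -
      have "0 \<le> G T r" unfolding G_def using that nn by (intro integral_nonneg integrable_continuous_interval cT) auto
      then show ?thesis unfolding p_def using nn by simp
    qed
    have Gnn: "0 \<le> G T u" unfolding G_def using nn by (intro integral_nonneg integrable_continuous_interval cT) auto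
    have "ennreal (G T u) ^ Suc n = ennreal (G T u ^ Suc n)" by (rule ennreal_power[OF Gnn])
    also have "\<dots> = (\<integral>\<^sup>+r. ennreal (indicator {u..T} r * p r) \<partial>lborel)"
      by (rule nn_integral_has_integral_lebesgue[OF pnn pint, symmetric])
    also have "\<dots> \<le> (\<integral>\<^sup>+r. ennreal (real (Suc n)) * (ennreal (f r) * F r ^ n * indicator {u..} r) \<partial>lborel)"
    proof (intro nn_integral_mono)
      fix r
      show "ennreal (indicator {u..T} r * p r) \<le> ennreal (real (Suc n)) * (ennreal (f r) * F r ^ n * indicator {u..} r)"
      proof (cases "r \<in> {u..T}")
        case True
        have G0: "0 \<le> G T r" unfolding G_def using nn True by (intro integral_nonneg integrable_continuous_interval cT) auto
        have "ennreal (indicator {u..T} r * p r) = ennreal (real (Suc n)) * (ennreal (f r) * ennreal (G T r) ^ n)"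
          using True G0 nn by (simp add: p_def ennreal_mult' ennreal_power mult.assoc)
        also have "\<dots> \<le> ennreal (real (Suc n)) * (ennreal (f r) * F r ^ n)"
          by (intro mult_left_mono power_mono_ennreal GF) auto
        finally show ?thesis using True by simp
      qed simp
    qed
    also have "\<dots> = ?R"
      by (rule nn_integral_cmult) measurable
    finally show ?thesis .
  qed
  have "F u = (\<integral>\<^sup>+s. (SUP k::nat. ennreal (f s) * indicator {u..u + real k} s) \<partial>lborel)"
    unfolding F_def by (simp add: SUP_mult_left_ennreal[symmetric] SUP_indicator_interval)
  also have "\<dots> = (SUP k::nat. \<integral>\<^sup>+s. ennreal (f s) * indicator {u..u + real k} s \<partial>lborel)"
    by (rule nn_integral_monotone_convergence_SUP)
       (auto simp: incseq_def le_fun_def indicator_def intro!: mult_left_mono)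
  also have "\<dots> = (SUP k::nat. ennreal (G (u + real k) u))"
  proof (intro SUP_cong refl)
    fix k :: nat
    show "(\<integral>\<^sup>+s. ennreal (f s) * indicator {u..u + real k} s \<partial>lborel) = ennreal (G (u + real k) u)"
      using nn_integral_has_integral_lebesgue[OF _ intT[of "u + real k" u]] nn
      by (simp add: mult.commute ennreal_mult_indicator)
  qed
  finally have Fu: "F u = (SUP k::nat. ennreal (G (u + real k) u))" .
  have inc: "incseq (\<lambda>k::nat. ennreal (G (u + real k) u))"
  proof (rule incseq_SucI)
    fix k :: nat
    have "ennreal (G (u + real k) u) = (\<integral>\<^sup>+s. ennreal (f s) * indicator {u..u + real k} s \<partial>lborel)"
      using nn_integral_has_integral_lebesgue[OF _ intT[of "u + real k" u]] nn
      by (simp add: mult.commute ennreal_mult_indicator)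
    also have "\<dots> \<le> (\<integral>\<^sup>+s. ennreal (f s) * indicator {u..u + real (Suc k)} s \<partial>lborel)"
      by (intro nn_integral_mono) (auto simp: indicator_def)
    also have "\<dots> = ennreal (G (u + real (Suc k)) u)"
      using nn_integral_has_integral_lebesgue[OF _ intT[of "u + real (Suc k)" u]] nn
      by (simp add: mult.commute ennreal_mult_indicator)
    finally show "ennreal (G (u + real k) u) \<le> ennreal (G (u + real (Suc k)) u)" .
  qed
  have "F u ^ Suc n = (SUP k::nat. ennreal (G (u + real k) u) ^ Suc n)"
    unfolding Fu by (rule SUP_power_incseq[OF inc])
  also have "\<dots> \<le> ?R"
    by (intro SUP_least fin) simp
  finally show ?thesis .
qed


lemma (in prob_space) indep_var_cong_space:
  assumes ind: "indep_var S X T Y" and X: "\<And>\<omega>. \<omega> \<in> space M \<Longrightarrow> X \<omega> = X' \<omega>"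
    and Y: "\<And>\<omega>. \<omega> \<in> space M \<Longrightarrow> Y \<omega> = Y' \<omega>"
  shows "indep_var S X' T Y'"
proof -
  have rv: "random_variable S X" "random_variable T Y" and eq: "distr M S X \<Otimes>\<^sub>M distr M T Y = distr M (S \<Otimes>\<^sub>M T) (\<lambda>x. (X x, Y x))"
    using ind unfolding indep_var_distribution_eq by auto
  have rv': "random_variable S X'" "random_variable T Y'"
    using rv measurable_cong[of M X X' S] measurable_cong[of M Y Y' T] X Y by auto
  have "distr M S X' = distr M S X" "distr M T Y' = distr M T Y"
    "distr M (S \<Otimes>\<^sub>M T) (\<lambda>x. (X' x, Y' x)) = distr M (S \<Otimes>\<^sub>M T) (\<lambda>x. (X x, Y x))"
    using X Y by (auto intro!: distr_cong)
  then show ?thesis unfolding indep_var_distribution_eq using rv' eq by simp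
qed

lemma LIMSEQ_floor_div: "(\<lambda>k::nat. real_of_int \<lfloor>r * real (Suc k)\<rfloor> / real (Suc k)) \<longlonglongrightarrow> r"
proof (rule tendsto_sandwich[of "\<lambda>k. r - 1 / real (Suc k)" _ _ "\<lambda>k. r"])
  show "\<forall>\<^sub>F k in sequentially. r - 1 / real (Suc k) \<le> real_of_int \<lfloor>r * real (Suc k)\<rfloor> / real (Suc k)"
  proof (intro always_eventually allI)
    fix k :: nat
    have "r * real (Suc k) - 1 \<le> real_of_int \<lfloor>r * real (Suc k)\<rfloor>" by linarith
    then have "(r * real (Suc k) - 1) / real (Suc k) \<le> real_of_int \<lfloor>r * real (Suc k)\<rfloor> / real (Suc k)"
      by (rule divide_right_mono) simp
    moreover have "(r * real (Suc k) - 1) / real (Suc k) = r - 1 / real (Suc k)"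
      by (simp only: diff_divide_distrib) simp
    ultimately show "r - 1 / real (Suc k) \<le> real_of_int \<lfloor>r * real (Suc k)\<rfloor> / real (Suc k)"
      by simp
  qed
  show "\<forall>\<^sub>F k in sequentially. real_of_int \<lfloor>r * real (Suc k)\<rfloor> / real (Suc k) \<le> r"
  proof (intro always_eventually allI)
    fix k :: nat
    have "real_of_int \<lfloor>r * real (Suc k)\<rfloor> \<le> r * real (Suc k)" by linarith
    then have "real_of_int \<lfloor>r * real (Suc k)\<rfloor> / real (Suc k) \<le> r * real (Suc k) / real (Suc k)"
      by (rule divide_right_mono) simp
    then show "real_of_int \<lfloor>r * real (Suc k)\<rfloor> / real (Suc k) \<le> r"
      by simp
  qed
  have "(\<lambda>k. 1 / real (Suc k)) \<longlonglongrightarrow> 0" by (rule LIMSEQ_Suc[OF lim_const_over_n[of 1]]) 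
  then show "(\<lambda>k. r - 1 / real (Suc k)) \<longlonglongrightarrow> r"
    using tendsto_diff[OF tendsto_const[of r]] by fastforce
qed simp

locale bmctx =
  fixes M :: "'w measure" and B B' :: "real \<Rightarrow> 'w \<Rightarrow> 'a::euclidean_space" and x y :: 'a
  assumes BM: "is_BM M B x" and BM': "is_BM M B' y" and IND: "indep_processes M B B'"

sublocale bmctx \<subseteq> prob_space M using BM unfolding is_BM_def by auto

context bmctx
begin

lemma B_meas: "0 \<le> t \<Longrightarrow> B t \<in> borel_measurable M"
  using BM unfolding is_BM_def by auto

lemma B'_meas: "0 \<le> t \<Longrightarrow> B' t \<in> borel_measurable M"
  using BM' unfolding is_BM_def by auto

lemma B_cont: "\<omega> \<in> space M \<Longrightarrow> continuous_on {0..} (\<lambda>t. B t \<omega>)"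
  using BM unfolding is_BM_def by auto

lemma B'_cont: "\<omega> \<in> space M \<Longrightarrow> continuous_on {0..} (\<lambda>t. B' t \<omega>)"
  using BM' unfolding is_BM_def by auto

lemma B_0: "\<omega> \<in> space M \<Longrightarrow> B 0 \<omega> = x"
  using BM unfolding is_BM_def by auto

lemma restrict_meas:
  assumes "T \<subseteq> {0..}"
  shows "(\<lambda>\<omega>. restrict (\<lambda>t. B t \<omega>) T) \<in> measurable M (PiM T (\<lambda>_. borel))"
    "(\<lambda>\<omega>. restrict (\<lambda>t. B' t \<omega>) T) \<in> measurable M (PiM T (\<lambda>_. borel))"
  using assms by (auto intro!: measurable_restrict B_meas B'_meas)

lemma joint_meas_gen:
  fixes Z :: "real \<Rightarrow> 'w \<Rightarrow> 'a"
  assumes meas: "\<And>t. 0 \<le> t \<Longrightarrow> Z t \<in> borel_measurable M"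
    and cont: "\<And>\<omega>. \<omega> \<in> space M \<Longrightarrow> continuous_on {0..} (\<lambda>t. Z t \<omega>)"
  shows "(\<lambda>p. Z (max 0 (fst p)) (snd p) :: 'a) \<in> borel_measurable (borel \<Otimes>\<^sub>M M)"
proof (rule borel_measurable_LIMSEQ_metric)
  fix k :: nat
  let ?g = "\<lambda>p::real \<times> 'w. \<lfloor>fst p * real (Suc k)\<rfloor>"
  have g: "?g \<in> measurable (borel \<Otimes>\<^sub>M M) (count_space UNIV)"
    by (rule measurable_compose[OF _ measurable_real_floor]) measurable
  have f: "(\<lambda>p. Z (max 0 (real_of_int i / real (Suc k))) (snd p)) \<in> borel_measurable (borel \<Otimes>\<^sub>M M)" for i :: int
    by (rule measurable_compose[OF measurable_snd meas]) simp
  show "(\<lambda>p. Z (max 0 (real_of_int (?g p) / real (Suc k))) (snd p)) \<in> borel_measurable (borel \<Otimes>\<^sub>M M)"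
    by (rule measurable_compose_countable[OF f g])
next
  fix p :: "real \<times> 'w" assume p: "p \<in> space (borel \<Otimes>\<^sub>M M)"
  then have w: "snd p \<in> space M" by (auto simp: space_pair_measure)
  have lim: "(\<lambda>k. max 0 (real_of_int \<lfloor>fst p * real (Suc k)\<rfloor> / real (Suc k))) \<longlonglongrightarrow> max 0 (fst p)"
    by (intro tendsto_max tendsto_const LIMSEQ_floor_div)
  show "(\<lambda>k. Z (max 0 (real_of_int \<lfloor>fst p * real (Suc k)\<rfloor> / real (Suc k))) (snd p)) \<longlonglongrightarrow> Z (max 0 (fst p)) (snd p)"
    by (rule continuous_on_tendsto_compose[OF cont[OF w] lim]) auto
qed

lemma Bc_joint: "(\<lambda>p. B (max 0 (fst p)) (snd p)) \<in> borel_measurable (borel \<Otimes>\<^sub>M M)"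
  by (rule joint_meas_gen[OF B_meas B_cont])

lemma B'c_joint: "(\<lambda>p. B' (max 0 (fst p)) (snd p)) \<in> borel_measurable (borel \<Otimes>\<^sub>M M)"
  by (rule joint_meas_gen[OF B'_meas B'_cont])

end


context bmctx
begin

lemma incr_indep:
  assumes u0: "0 \<le> u" and ur: "u < r" and Tfin: "finite T" and Tsub: "T \<subseteq> {0..u}"
  shows "indep_var (PiM T (\<lambda>_. borel)) (\<lambda>\<omega>. restrict (\<lambda>t. B t \<omega>) T) (PiM {0::real} (\<lambda>_. borel)) (\<lambda>\<omega>. restrict (\<lambda>_. B r \<omega> - B u \<omega>) {0::real})
     \<and> distr M borel (\<lambda>\<omega>. B r \<omega> - B u \<omega>) = density lborel (heat_kernel (r - u))"
proof -
  define S where "S = insert 0 (insert u T)"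
  have Sfin: "finite S" and S0: "S \<subseteq> {0..u}" and "0 \<in> S" "u \<in> S"
    using Tfin Tsub u0 by (auto simp: S_def)
  define L where "L = sorted_list_of_set S"
  define m where "m = length L"
  have setL: "set L = S" using Sfin by (simp add: L_def)
  have ssL: "sorted_wrt (<) L" unfolding L_def by (rule strict_sorted_list_of_set)
  have m1: "m \<ge> 1" using setL \<open>0 \<in> S\<close> by (cases L) (auto simp: m_def)
  have Lin: "i < m \<Longrightarrow> L ! i \<in> S" for i using setL by (auto simp: m_def)
  have Lless: "i < j \<Longrightarrow> j < m \<Longrightarrow> L ! i < L ! j" for i j
    using sorted_wrt_nth_less[OF ssL] by (auto simp: m_def)
  have L0: "L ! 0 = 0"
  proof -
    obtain j where j: "j < m" "L ! j = 0" using \<open>0 \<in> S\<close> setL by (auto simp: m_def in_set_conv_nth)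
    have "L ! 0 \<le> 0"
    proof (cases "j = 0")
      case False then show ?thesis using Lless[of 0 j] j by auto
    qed (use j in auto)
    moreover have "L ! 0 \<ge> 0" using Lin[of 0] m1 S0 by auto
    ultimately show ?thesis by simp
  qed
  have Llast: "L ! (m - 1) = u"
  proof -
    obtain j where j: "j < m" "L ! j = u" using \<open>u \<in> S\<close> setL by (auto simp: m_def in_set_conv_nth)
    show ?thesis
    proof (cases "j = m - 1")
      case False
      then have "L ! j < L ! (m - 1)" using j by (intro Lless) auto
      moreover have "L ! (m - 1) \<le> u" using Lin[of "m - 1"] m1 S0 by auto
      ultimately show ?thesis using j by auto
    qed (use j in auto)
  qed
  define t where "t i = (if i < m then L ! i else r)" for i
  have t0: "t 0 = 0" using m1 L0 by (simp add: t_def)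
  have tinc: "\<forall>i<m. t i < t (Suc i)"
  proof (intro allI impI)
    fix i assume i: "i < m"
    show "t i < t (Suc i)"
    proof (cases "Suc i < m")
      case True then show ?thesis using i Lless[of i "Suc i"] by (simp add: t_def)
    next
      case False
      then have "i = m - 1" using i by simp
      then show ?thesis using i False Llast ur by (simp add: t_def)
    qed
  qed
  define \<Delta> where "\<Delta> i \<omega> = B (t (Suc i)) \<omega> - B (t i) \<omega>" for i \<omega>
  have BMi: "indep_vars (\<lambda>_. borel) \<Delta> {..<m} \<and>
        (\<forall>i<m. distr M borel (\<Delta> i) = density lborel (\<lambda>z. ennreal (heat_kernel (t (Suc i) - t i) z)))"
    using BM t0 tinc unfolding is_BM_def \<Delta>_def by blast
  have tm: "t m = r" "t (m - 1) = u" using m1 Llast by (auto simp: t_def)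
  have Dlast: "\<Delta> (m - 1) = (\<lambda>\<omega>. B r \<omega> - B u \<omega>)"
    using tm m1 by (simp add: \<Delta>_def fun_eq_iff)
  have distr_part: "distr M borel (\<lambda>\<omega>. B r \<omega> - B u \<omega>) = density lborel (heat_kernel (r - u))"
    using BMi m1 tm Dlast by (metis One_nat_def Suc_pred diff_less less_numeral_extra(1) order_less_le_trans)
  define idx where "idx \<tau> = (SOME j. j < m \<and> L ! j = \<tau>)" for \<tau>
  have idx: "idx \<tau> < m \<and> L ! (idx \<tau>) = \<tau>" if "\<tau> \<in> T" for \<tau>
  proof -
    have "\<exists>j. j < m \<and> L ! j = \<tau>" using that setL by (auto simp: S_def m_def in_set_conv_nth)
    then show ?thesis unfolding idx_def by (rule someI_ex)
  qed
  define \<Phi> where "\<Phi> \<delta> = restrict (\<lambda>\<tau>. x + (\<Sum>i<idx \<tau>. \<delta> i)) T" for \<delta> :: "nat \<Rightarrow> 'a"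
  have \<Phi>_meas: "\<Phi> \<in> measurable (PiM {..<m - 1} (\<lambda>_. borel)) (PiM T (\<lambda>_. borel))"
    unfolding \<Phi>_def
  proof (rule measurable_restrict)
    fix \<tau> assume "\<tau> \<in> T"
    then have "idx \<tau> \<le> m - 1" using idx[of \<tau>] by (simp add: less_Suc_eq_le[symmetric])
    then show "(\<lambda>\<delta>. x + (\<Sum>i<idx \<tau>. \<delta> i)) \<in> borel_measurable (PiM {..<m - 1} (\<lambda>_. borel))"
      by (intro borel_measurable_add borel_measurable_const borel_measurable_sum measurable_component_singleton) auto
  qed
  have ind0: "indep_var (PiM {..<m - 1} (\<lambda>_. borel)) (\<lambda>\<omega>. restrict (\<lambda>i. \<Delta> i \<omega>) {..<m - 1})
       (PiM {m - 1} (\<lambda>_. borel)) (\<lambda>\<omega>. restrict (\<lambda>i. \<Delta> i \<omega>) {m - 1})"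
    using BMi m1 by (intro indep_var_restrict) auto
  have ind1: "indep_var (PiM T (\<lambda>_. borel)) (\<Phi> \<circ> (\<lambda>\<omega>. restrict (\<lambda>i. \<Delta> i \<omega>) {..<m - 1}))
      (PiM {0::real} (\<lambda>_. borel)) ((\<lambda>\<delta>. restrict (\<lambda>_. \<delta> (m - 1)) {0::real}) \<circ> (\<lambda>\<omega>. restrict (\<lambda>i. \<Delta> i \<omega>) {m - 1}))"
    by (rule indep_var_compose[OF ind0 \<Phi>_meas]) (intro measurable_restrict measurable_component_singleton, simp)
  have ind2: "indep_var (PiM T (\<lambda>_. borel)) (\<lambda>\<omega>. restrict (\<lambda>t. B t \<omega>) T) (PiM {0::real} (\<lambda>_. borel)) (\<lambda>\<omega>. restrict (\<lambda>_. B r \<omega> - B u \<omega>) {0::real})"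
  proof (rule indep_var_cong_space[OF ind1])
    fix \<omega> assume w: "\<omega> \<in> space M"
    show "(\<Phi> \<circ> (\<lambda>\<omega>. restrict (\<lambda>i. \<Delta> i \<omega>) {..<m - 1})) \<omega> = restrict (\<lambda>t. B t \<omega>) T"
    proof
      fix \<tau>
      show "(\<Phi> \<circ> (\<lambda>\<omega>. restrict (\<lambda>i. \<Delta> i \<omega>) {..<m - 1})) \<omega> \<tau> = restrict (\<lambda>t. B t \<omega>) T \<tau>"
      proof (cases "\<tau> \<in> T")
        case True
        have le: "idx \<tau> \<le> m - 1" using idx[OF True] by auto
        have "(\<Sum>i<idx \<tau>. restrict (\<lambda>i. \<Delta> i \<omega>) {..<m - 1} i) = (\<Sum>i<idx \<tau>. \<Delta> i \<omega>)"
          using le by (intro sum.cong) auto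
        also have "\<dots> = B (t (idx \<tau>)) \<omega> - B (t 0) \<omega>"
          unfolding \<Delta>_def by (rule sum_lessThan_telescope)
        also have "t (idx \<tau>) = \<tau>" using idx[OF True] by (simp add: t_def)
        finally show ?thesis using True B_0[OF w] t0 by (simp add: \<Phi>_def)
      qed (simp add: \<Phi>_def)
    qed
  next
    fix \<omega> assume "\<omega> \<in> space M"
    show "((\<lambda>\<delta>. restrict (\<lambda>_. \<delta> (m - 1)) {0::real}) \<circ> (\<lambda>\<omega>. restrict (\<lambda>i. \<Delta> i \<omega>) {m - 1})) \<omega> = restrict (\<lambda>_. B r \<omega> - B u \<omega>) {0::real}"
      using Dlast by (simp add: fun_eq_iff)
  qed
  show ?thesis using ind2 distr_part by simp
qed

end


lemma (in prob_space) indep_var_distr_compose: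
  assumes ind: "indep_var S X T Y" and f: "f \<in> measurable S N1" and g: "g \<in> measurable T N2"
  shows "distr M (N1 \<Otimes>\<^sub>M N2) (\<lambda>\<omega>. (f (X \<omega>), g (Y \<omega>))) = distr M N1 (\<lambda>\<omega>. f (X \<omega>)) \<Otimes>\<^sub>M distr M N2 (\<lambda>\<omega>. g (Y \<omega>))"
proof -
  have rv: "X \<in> measurable M S" "Y \<in> measurable M T"
    and eq: "distr M S X \<Otimes>\<^sub>M distr M T Y = distr M (S \<Otimes>\<^sub>M T) (\<lambda>x. (X x, Y x))"
    using ind unfolding indep_var_distribution_eq by auto
  interpret PX: prob_space "distr M S X" by (rule prob_space_distr[OF rv(1)])
  interpret PY: prob_space "distr M T Y" by (rule prob_space_distr[OF rv(2)])
  have f': "f \<in> measurable (distr M S X) N1" using f by simp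
  have g': "g \<in> measurable (distr M T Y) N2" using g by simp
  have sf: "sigma_finite_measure (distr (distr M T Y) N2 g)"
    by (rule prob_space_imp_sigma_finite, rule PY.prob_space_distr[OF g'])
  have "distr M N1 (\<lambda>\<omega>. f (X \<omega>)) \<Otimes>\<^sub>M distr M N2 (\<lambda>\<omega>. g (Y \<omega>))
      = distr (distr M S X) N1 f \<Otimes>\<^sub>M distr (distr M T Y) N2 g"
    using rv f g by (simp add: distr_distr comp_def)
  also have "\<dots> = distr (distr M S X \<Otimes>\<^sub>M distr M T Y) (N1 \<Otimes>\<^sub>M N2) (\<lambda>(x, y). (f x, g y))"
    by (rule pair_measure_distr[OF f' g' sf])
  also have "\<dots> = distr (distr M (S \<Otimes>\<^sub>M T) (\<lambda>x. (X x, Y x))) (N1 \<Otimes>\<^sub>M N2) (\<lambda>(x, y). (f x, g y))"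
    by (simp only: eq)
  also have "\<dots> = distr M (N1 \<Otimes>\<^sub>M N2) (\<lambda>\<omega>. (f (X \<omega>), g (Y \<omega>)))"
    using rv f g by (subst distr_distr) (auto simp: comp_def)
  finally show ?thesis ..
qed

context bmctx
begin

abbreviation "PS \<equiv> PiM {0::real..} (\<lambda>_. borel :: 'a measure)"

lemma IND': "indep_var PS (\<lambda>\<omega>. restrict (\<lambda>t. B t \<omega>) {0..}) PS (\<lambda>\<omega>. restrict (\<lambda>t. B' t \<omega>) {0..})"
  using IND unfolding indep_processes_def .

lemma triple:
  assumes u0: "0 \<le> u" and ur: "u < r" and Tfin: "finite T" and Tsub: "T \<subseteq> {0..u}"
    and G: "G \<in> borel_measurable ((PiM T (\<lambda>_. borel) \<Otimes>\<^sub>M borel) \<Otimes>\<^sub>M PS)"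
  shows "(\<integral>\<^sup>+\<omega>. G ((restrict (\<lambda>t. B t \<omega>) T, B r \<omega> - B u \<omega>), restrict (\<lambda>t. B' t \<omega>) {0..}) \<partial>M)
    = (\<integral>\<^sup>+w. \<integral>\<^sup>+a. \<integral>\<^sup>+z. G ((a, z), w) \<partial>(distr M borel (\<lambda>\<omega>. B r \<omega> - B u \<omega>))
         \<partial>(distr M (PiM T (\<lambda>_. borel)) (\<lambda>\<omega>. restrict (\<lambda>t. B t \<omega>) T)) \<partial>(distr M PS (\<lambda>\<omega>. restrict (\<lambda>t. B' t \<omega>) {0..})))"
proof -
  let ?XT = "\<lambda>\<omega>. restrict (\<lambda>t. B t \<omega>) T"
  let ?D = "\<lambda>\<omega>. B r \<omega> - B u \<omega>"
  let ?W = "\<lambda>\<omega>. restrict (\<lambda>t. B' t \<omega>) {0..}"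
  let ?PX = "distr M (PiM T (\<lambda>_. borel)) ?XT"
  let ?PD = "distr M borel ?D"
  let ?PW = "distr M PS ?W"
  let ?P1 = "distr M (PiM T (\<lambda>_. borel) \<Otimes>\<^sub>M borel) (\<lambda>\<omega>. (?XT \<omega>, ?D \<omega>))"
  have TS: "T \<subseteq> {0..}" using Tsub by auto
  have XTm: "?XT \<in> measurable M (PiM T (\<lambda>_. borel))" by (rule restrict_meas(1)[OF TS])
  have Wm: "?W \<in> measurable M PS" by (rule restrict_meas(2)) simp
  have Dm: "?D \<in> borel_measurable M" using u0 ur by (intro borel_measurable_diff B_meas) auto
  interpret PX: prob_space ?PX by (rule prob_space_distr[OF XTm])
  interpret PD: prob_space ?PD by (rule prob_space_distr[OF Dm])
  interpret PW: prob_space ?PW by (rule prob_space_distr[OF Wm])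
  interpret XD: pair_prob_space ?PX ?PD ..
  interpret P1: prob_space ?P1 by (rule prob_space_distr) (use XTm Dm in measurable)
  interpret P1W: pair_prob_space ?P1 ?PW ..
  define \<Theta> where "\<Theta> p = (restrict p T, p r - p u)" for p :: "real \<Rightarrow> 'a"
  have \<Theta>m: "\<Theta> \<in> measurable PS (PiM T (\<lambda>_. borel) \<Otimes>\<^sub>M borel)"
    unfolding \<Theta>_def using TS u0 ur
    by (intro measurable_Pair measurable_restrict_subset borel_measurable_diff measurable_component_singleton) auto
  have J: "distr M ((PiM T (\<lambda>_. borel) \<Otimes>\<^sub>M borel) \<Otimes>\<^sub>M PS) (\<lambda>\<omega>. ((?XT \<omega>, ?D \<omega>), ?W \<omega>)) = ?P1 \<Otimes>\<^sub>M ?PW"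
  proof -
    have e: "(\<lambda>\<omega>. (\<Theta> (restrict (\<lambda>t. B t \<omega>) {0..}), id (restrict (\<lambda>t. B' t \<omega>) {0..}))) = (\<lambda>\<omega>. ((?XT \<omega>, ?D \<omega>), ?W \<omega>))"
      using TS u0 ur by (auto simp: \<Theta>_def fun_eq_iff restrict_def)
    have e1: "(\<lambda>\<omega>. \<Theta> (restrict (\<lambda>t. B t \<omega>) {0..})) = (\<lambda>\<omega>. (?XT \<omega>, ?D \<omega>))"
      using TS u0 ur by (auto simp: \<Theta>_def fun_eq_iff restrict_def)
    show ?thesis
      using indep_var_distr_compose[OF IND' \<Theta>m measurable_ident[of PS]] unfolding e e1 by (simp add: id_def)
  qed
  have P1eq: "?P1 = ?PX \<Otimes>\<^sub>M ?PD"
  proof -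
    have ind: "indep_var (PiM T (\<lambda>_. borel)) ?XT (PiM {0::real} (\<lambda>_. borel)) (\<lambda>\<omega>. restrict (\<lambda>_. B r \<omega> - B u \<omega>) {0::real})"
      using incr_indep[OF u0 ur Tfin Tsub] by simp
    have ev: "(\<lambda>h. h 0) \<in> measurable (PiM {0::real} (\<lambda>_. borel)) (borel :: 'a measure)"
      by (rule measurable_component_singleton) simp
    show ?thesis
      using indep_var_distr_compose[OF ind measurable_ident ev] by (simp add: id_def)
  qed
  have Gm: "G \<in> borel_measurable (?P1 \<Otimes>\<^sub>M ?PW)"
    using G by (simp add: measurable_cong_sets[OF sets_pair_measure_cong[OF sets_distr sets_distr] refl])
  have "(\<integral>\<^sup>+\<omega>. G ((?XT \<omega>, ?D \<omega>), ?W \<omega>) \<partial>M)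
      = (\<integral>\<^sup>+q. G q \<partial>(distr M ((PiM T (\<lambda>_. borel) \<Otimes>\<^sub>M borel) \<Otimes>\<^sub>M PS) (\<lambda>\<omega>. ((?XT \<omega>, ?D \<omega>), ?W \<omega>))))"
    by (rule nn_integral_distr[symmetric]) (use XTm Dm Wm G in measurable)
  also have "\<dots> = (\<integral>\<^sup>+q. G q \<partial>(?P1 \<Otimes>\<^sub>M ?PW))" by (simp only: J)
  also have "\<dots> = (\<integral>\<^sup>+w. \<integral>\<^sup>+v. G (v, w) \<partial>?P1 \<partial>?PW)"
    by (rule P1W.nn_integral_snd[symmetric, OF Gm])
  also have "\<dots> = (\<integral>\<^sup>+w. \<integral>\<^sup>+a. \<integral>\<^sup>+z. G ((a, z), w) \<partial>?PD \<partial>?PX \<partial>?PW)"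
  proof (rule nn_integral_cong)
    fix w assume w: "w \<in> space ?PW"
    have Gw: "(\<lambda>v. G (v, w)) \<in> borel_measurable (?PX \<Otimes>\<^sub>M ?PD)"
    proof -
      have "(\<lambda>v. G (v, w)) \<in> borel_measurable (PiM T (\<lambda>_. borel) \<Otimes>\<^sub>M borel)"
      proof (rule measurable_compose[OF _ G])
        have w': "w \<in> space PS" using w by simp
        show "(\<lambda>v. (v, w)) \<in> measurable (PiM T (\<lambda>_. borel) \<Otimes>\<^sub>M borel) ((PiM T (\<lambda>_. borel) \<Otimes>\<^sub>M borel) \<Otimes>\<^sub>M PS)"
          by (rule measurable_Pair[OF measurable_ident_sets[OF refl] measurable_const[OF w']])
      qed
      then show ?thesis
        by (simp add: measurable_cong_sets[OF sets_pair_measure_cong[OF sets_distr sets_distr] refl])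
    qed
    show "(\<integral>\<^sup>+v. G (v, w) \<partial>?P1) = (\<integral>\<^sup>+a. \<integral>\<^sup>+z. G ((a, z), w) \<partial>?PD \<partial>?PX)"
      unfolding P1eq using PD.nn_integral_fst[OF Gw] by simp
  qed
  finally show ?thesis .
qed

end


context bmctx
begin

lemma norm1:
  assumes "0 \<le> u" "u < r"
  shows "(\<integral>\<^sup>+z. ennreal (heat_kernel (r - u) (z::'a)) \<partial>lborel) = 1"
proof -
  have Dm: "(\<lambda>\<omega>. B r \<omega> - B u \<omega>) \<in> borel_measurable M" using assms by (intro borel_measurable_diff B_meas) auto
  have PD: "distr M borel (\<lambda>\<omega>. B r \<omega> - B u \<omega>) = density lborel (heat_kernel (r - u))"
    using incr_indep[OF assms, of "{}"] by simp
  interpret PD: prob_space "distr M borel (\<lambda>\<omega>. B r \<omega> - B u \<omega>)" by (rule prob_space_distr[OF Dm])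
  have "1 = emeasure (density lborel (\<lambda>z. ennreal (heat_kernel (r - u) (z::'a)))) UNIV"
    using PD.emeasure_space_1 unfolding PD by simp
  also have "\<dots> = (\<integral>\<^sup>+z. ennreal (heat_kernel (r - u) (z::'a)) * indicator UNIV z \<partial>lborel)"
    by (rule emeasure_density) auto
  finally show ?thesis by simp
qed

lemma step_bound:
  assumes u0: "0 \<le> u" and ur: "u < r" and Tfin: "finite T" and Tsub: "T \<subseteq> {0..u}" and uT: "u \<in> T"
    and b0: "0 < \<beta>" and bd: "\<beta> < real DIM('a)"
    and \<Psi>: "\<Psi> \<in> borel_measurable (PiM T (\<lambda>_. borel) \<Otimes>\<^sub>M PS)"
  shows "(\<integral>\<^sup>+\<omega>. \<Psi> (restrict (\<lambda>t. B t \<omega>) T, restrict (\<lambda>t. B' t \<omega>) {0..}) * ennreal (hb \<beta> (B r \<omega> - B' r \<omega>)) \<partial>M)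
    \<le> ennreal (phi \<beta> DIM('a) (r - u)) * (\<integral>\<^sup>+\<omega>. \<Psi> (restrict (\<lambda>t. B t \<omega>) T, restrict (\<lambda>t. B' t \<omega>) {0..}) \<partial>M)"
proof -
  let ?XT = "\<lambda>\<omega>. restrict (\<lambda>t. B t \<omega>) T"
  let ?D = "\<lambda>\<omega>. B r \<omega> - B u \<omega>"
  let ?W = "\<lambda>\<omega>. restrict (\<lambda>t. B' t \<omega>) {0..}"
  let ?PX = "distr M (PiM T (\<lambda>_. borel)) ?XT"
  let ?PD = "distr M borel ?D"
  let ?PW = "distr M PS ?W"
  let ?\<phi> = "ennreal (phi \<beta> DIM('a) (r - u))"
  define G1 where "G1 q = \<Psi> (fst (fst q), snd q) * ennreal (hb \<beta> (fst (fst q) u + snd (fst q) - snd q r))" for q :: "((real \<Rightarrow> 'a) \<times> 'a) \<times> (real \<Rightarrow> 'a)"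
  define G2 where "G2 q = ?\<phi> * \<Psi> (fst (fst q), snd q)" for q :: "((real \<Rightarrow> 'a) \<times> 'a) \<times> (real \<Rightarrow> 'a)"
  have pm: "(\<lambda>q::((real \<Rightarrow> 'a) \<times> 'a) \<times> (real \<Rightarrow> 'a). (fst (fst q), snd q)) \<in> measurable ((PiM T (\<lambda>_. borel) \<Otimes>\<^sub>M borel) \<Otimes>\<^sub>M PS) (PiM T (\<lambda>_. borel) \<Otimes>\<^sub>M PS)"
    by measurable
  have \<Psi>q: "(\<lambda>q::((real \<Rightarrow> 'a) \<times> 'a) \<times> (real \<Rightarrow> 'a). \<Psi> (fst (fst q), snd q)) \<in> borel_measurable ((PiM T (\<lambda>_. borel) \<Otimes>\<^sub>M borel) \<Otimes>\<^sub>M PS)"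
    by (rule measurable_compose[OF pm \<Psi>])
  have hq: "(\<lambda>q::((real \<Rightarrow> 'a) \<times> 'a) \<times> (real \<Rightarrow> 'a). fst (fst q) u + snd (fst q) - snd q r) \<in> borel_measurable ((PiM T (\<lambda>_. borel) \<Otimes>\<^sub>M borel) \<Otimes>\<^sub>M PS)"
  proof -
    have c1: "(\<lambda>q::((real \<Rightarrow> 'a) \<times> 'a) \<times> (real \<Rightarrow> 'a). fst (fst q) u) \<in> borel_measurable ((PiM T (\<lambda>_. borel) \<Otimes>\<^sub>M borel) \<Otimes>\<^sub>M PS)"
      by (rule measurable_compose[OF _ measurable_component_singleton[OF uT]]) measurable
    have c2: "(\<lambda>q::((real \<Rightarrow> 'a) \<times> 'a) \<times> (real \<Rightarrow> 'a). snd q r) \<in> borel_measurable ((PiM T (\<lambda>_. borel) \<Otimes>\<^sub>M borel) \<Otimes>\<^sub>M PS)"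
      by (rule measurable_compose[OF _ measurable_component_singleton]) (use u0 ur in auto)
    show ?thesis by (intro borel_measurable_diff borel_measurable_add c1 c2) measurable
  qed
  have G1m: "G1 \<in> borel_measurable ((PiM T (\<lambda>_. borel) \<Otimes>\<^sub>M borel) \<Otimes>\<^sub>M PS)"
    unfolding G1_def by (intro borel_measurable_times_ennreal \<Psi>q measurable_compose[OF hq] measurable_compose[OF hb_meas] borel_measurable_continuous_onI) (auto intro: continuous_on_ennreal continuous_on_id)
  have G2m: "G2 \<in> borel_measurable ((PiM T (\<lambda>_. borel) \<Otimes>\<^sub>M borel) \<Otimes>\<^sub>M PS)"
    unfolding G2_def by (intro borel_measurable_times_ennreal \<Psi>q borel_measurable_const)
  have PD: "?PD = density lborel (heat_kernel (r - u))"
    using incr_indep[OF u0 ur Tfin Tsub] by simp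
  have Dm: "?D \<in> borel_measurable M" using u0 ur by (intro borel_measurable_diff B_meas) auto
  interpret PDp: prob_space ?PD by (rule prob_space_distr[OF Dm])
  have inner: "(\<integral>\<^sup>+z. G1 ((a, z), w) \<partial>?PD) \<le> (\<integral>\<^sup>+z. G2 ((a, z), w) \<partial>?PD)" for a w
  proof -
    have hm: "(\<lambda>z. ennreal (hb \<beta> (a u - w r + z))) \<in> borel_measurable ?PD" by simp
    have "(\<integral>\<^sup>+z. G1 ((a, z), w) \<partial>?PD) = \<Psi> (a, w) * (\<integral>\<^sup>+z. ennreal (hb \<beta> (a u - w r + z)) \<partial>?PD)"
    proof -
      have e: "G1 ((a, z), w) = \<Psi> (a, w) * ennreal (hb \<beta> (a u - w r + z))" for z
        unfolding G1_def by (simp add: algebra_simps)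
      show ?thesis by (simp only: e nn_integral_cmult[OF hm])
    qed
    also have "(\<integral>\<^sup>+z. ennreal (hb \<beta> (a u - w r + z)) \<partial>?PD)
        = (\<integral>\<^sup>+z. ennreal (heat_kernel (r - u) z) * ennreal (hb \<beta> (a u - w r + z)) \<partial>lborel)"
      unfolding PD by (rule nn_integral_density) auto
    also have "\<dots> \<le> ?\<phi>"
      by (rule phi_bound) (use u0 ur b0 bd norm1[OF u0 ur] in auto)
    also have "\<Psi> (a, w) * ?\<phi> = (\<integral>\<^sup>+z. G2 ((a, z), w) \<partial>?PD)"
    proof -
      have "emeasure ?PD UNIV = 1" using PDp.emeasure_space_1 by simp
      then show ?thesis unfolding G2_def by (simp add: mult.commute)
    qed
    finally show ?thesis by (simp add: mult_left_mono)
  qed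
  have TS: "T \<subseteq> {0..}" using Tsub by auto
  have "(\<integral>\<^sup>+\<omega>. \<Psi> (?XT \<omega>, ?W \<omega>) * ennreal (hb \<beta> (B r \<omega> - B' r \<omega>)) \<partial>M) = (\<integral>\<^sup>+\<omega>. G1 ((?XT \<omega>, ?D \<omega>), ?W \<omega>) \<partial>M)"
    using uT u0 ur by (intro nn_integral_cong) (auto simp: G1_def)
  also have "\<dots> = (\<integral>\<^sup>+w. \<integral>\<^sup>+a. \<integral>\<^sup>+z. G1 ((a, z), w) \<partial>?PD \<partial>?PX \<partial>?PW)"
    by (rule triple[OF u0 ur Tfin Tsub G1m])
  also have "\<dots> \<le> (\<integral>\<^sup>+w. \<integral>\<^sup>+a. \<integral>\<^sup>+z. G2 ((a, z), w) \<partial>?PD \<partial>?PX \<partial>?PW)"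
    by (intro nn_integral_mono inner)
  also have "\<dots> = (\<integral>\<^sup>+\<omega>. G2 ((?XT \<omega>, ?D \<omega>), ?W \<omega>) \<partial>M)"
    by (rule triple[OF u0 ur Tfin Tsub G2m, symmetric])
  also have "\<dots> = ?\<phi> * (\<integral>\<^sup>+\<omega>. \<Psi> (?XT \<omega>, ?W \<omega>) \<partial>M)"
    unfolding G2_def
    by (simp, rule nn_integral_cmult, rule measurable_compose[OF _ \<Psi>], use restrict_meas[OF TS] restrict_meas[of "{0..}"] in measurable)
  finally show ?thesis .
qed

end


context bmctx
begin

definition fB :: "real \<Rightarrow> 'w \<Rightarrow> real \<Rightarrow> real" where
  "fB \<beta> \<omega> s = hb \<beta> (B (max 0 s) \<omega> - B' (max 0 s) \<omega>)"

definition Fu :: "real \<Rightarrow> real \<Rightarrow> 'w \<Rightarrow> ennreal" where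
  "Fu \<beta> u \<omega> = (\<integral>\<^sup>+s. ennreal (fB \<beta> \<omega> s) * indicator {u..} s \<partial>lborel)"

lemma fB_joint: "(\<lambda>p. ennreal (fB \<beta> (fst p) (snd p))) \<in> borel_measurable (M \<Otimes>\<^sub>M lborel)"
proof -
  have sw: "(\<lambda>p::'w \<times> real. (snd p, fst p)) \<in> measurable (M \<Otimes>\<^sub>M lborel) (borel \<Otimes>\<^sub>M M)"
    by measurable
  have b1: "(\<lambda>p::'w \<times> real. B (max 0 (snd p)) (fst p)) \<in> borel_measurable (M \<Otimes>\<^sub>M lborel)"
    using measurable_compose[OF sw Bc_joint] by simp
  have b2: "(\<lambda>p::'w \<times> real. B' (max 0 (snd p)) (fst p)) \<in> borel_measurable (M \<Otimes>\<^sub>M lborel)"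
    using measurable_compose[OF sw B'c_joint] by simp
  show ?thesis unfolding fB_def
    by (intro measurable_compose[OF _ measurable_ennreal] measurable_compose[OF _ hb_meas] borel_measurable_diff b1 b2)
qed

lemma Fu_joint: "(\<lambda>p. Fu \<beta> (snd p) (fst p)) \<in> borel_measurable (M \<Otimes>\<^sub>M lborel)"
proof -
  have pr: "(\<lambda>q::('w \<times> real) \<times> real. (fst (fst q), snd q)) \<in> measurable ((M \<Otimes>\<^sub>M lborel) \<Otimes>\<^sub>M lborel) (M \<Otimes>\<^sub>M lborel)"
    by measurable
  have f1: "(\<lambda>q::('w \<times> real) \<times> real. ennreal (fB \<beta> (fst (fst q)) (snd q))) \<in> borel_measurable ((M \<Otimes>\<^sub>M lborel) \<Otimes>\<^sub>M lborel)"
    using measurable_compose[OF pr fB_joint] by simp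
  have "(\<lambda>q::('w \<times> real) \<times> real. ennreal (fB \<beta> (fst (fst q)) (snd q)) * indicator {snd (fst q)..} (snd q))
      = (\<lambda>q. if snd (fst q) \<le> snd q then ennreal (fB \<beta> (fst (fst q)) (snd q)) else 0)"
    by (auto simp: fun_eq_iff indicator_def)
  moreover have "(\<lambda>q::('w \<times> real) \<times> real. if snd (fst q) \<le> snd q then ennreal (fB \<beta> (fst (fst q)) (snd q)) else 0)
      \<in> borel_measurable ((M \<Otimes>\<^sub>M lborel) \<Otimes>\<^sub>M lborel)"
    using f1 by measurable
  ultimately have "case_prod (\<lambda>p s. ennreal (fB \<beta> (fst p) s) * indicator {snd p..} s) \<in> borel_measurable ((M \<Otimes>\<^sub>M lborel) \<Otimes>\<^sub>M lborel)"
    by (simp add: case_prod_beta')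
  from lborel.borel_measurable_nn_integral[OF this] show ?thesis
    unfolding Fu_def by simp
qed

lemma fB_cont: "\<omega> \<in> space M \<Longrightarrow> continuous_on UNIV (fB \<beta> \<omega>)"
proof -
  assume w: "\<omega> \<in> space M"
  have m: "continuous_on UNIV (\<lambda>s::real. max 0 s)" by (intro continuous_intros)
  have c1: "continuous_on UNIV (\<lambda>s. B (max 0 s) \<omega>)"
    by (rule continuous_on_compose2[OF B_cont[OF w] m]) auto
  have c2: "continuous_on UNIV (\<lambda>s. B' (max 0 s) \<omega>)"
    by (rule continuous_on_compose2[OF B'_cont[OF w] m]) auto
  show ?thesis unfolding fB_def
    by (rule continuous_on_compose2[OF hb_cont continuous_on_diff[OF c1 c2]]) auto
qed

end


lemma ennreal_pow_meas: "f \<in> borel_measurable N \<Longrightarrow> (\<lambda>z. (f z::ennreal) ^ n) \<in> borel_measurable N"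
  by (induction n) (auto intro!: borel_measurable_times_ennreal)

context bmctx
begin

lemma phi_meas[measurable]: "phi \<beta> d \<in> borel_measurable borel"
  unfolding phi_def by measurable

lemma phi_shift_int:
  assumes b: "2 < \<beta>" "\<beta> < d"
  shows "(\<integral>\<^sup>+r. ennreal (phi \<beta> d (r - u)) * indicator {u..} r \<partial>lborel) \<le> ennreal (Kc \<beta> d)"
proof -
  have m: "(\<lambda>r. ennreal (phi \<beta> d (r - u)) * indicator {u..} r) \<in> borel_measurable borel" by measurable
  have "(\<integral>\<^sup>+r. ennreal (phi \<beta> d (r - u)) * indicator {u..} r \<partial>lborel)
      = (\<integral>\<^sup>+s. ennreal (phi \<beta> d ((u + 1 * s) - u)) * indicator {u..} (u + 1 * s) \<partial>lborel)"
    using nn_integral_real_affine[OF m, of 1 u] by simp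
  also have "\<dots> = (\<integral>\<^sup>+s. ennreal (phi \<beta> d s) * indicator {0..} s \<partial>lborel)"
    by (intro nn_integral_cong) (simp add: indicator_def)
  also have "\<dots> \<le> ennreal (Kc \<beta> d)" by (rule K_bound[OF b])
  finally show ?thesis .
qed

lemma moment_bound:
  assumes b: "2 < \<beta>" "\<beta> < real DIM('a)"
  shows "\<forall>u T \<Psi>. 0 \<le> u \<longrightarrow> finite T \<longrightarrow> T \<subseteq> {0..u} \<longrightarrow> \<Psi> \<in> borel_measurable (PiM T (\<lambda>_. borel) \<Otimes>\<^sub>M PS) \<longrightarrow>
     (\<integral>\<^sup>+\<omega>. \<Psi> (restrict (\<lambda>t. B t \<omega>) T, restrict (\<lambda>t. B' t \<omega>) {0..}) * Fu \<beta> u \<omega> ^ n \<partial>M)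
     \<le> ennreal (fact n * Kc \<beta> DIM('a) ^ n) * (\<integral>\<^sup>+\<omega>. \<Psi> (restrict (\<lambda>t. B t \<omega>) T, restrict (\<lambda>t. B' t \<omega>) {0..}) \<partial>M)"
proof (induction n)
  case 0
  then show ?case by simp
next
  case (Suc n)
  let ?K = "Kc \<beta> DIM('a)"
  have K0: "0 < ?K" using Kc_pos b by simp
  show ?case
  proof (intro allI impI)
    fix u :: real and T :: "real set" and \<Psi> :: "(real \<Rightarrow> 'a) \<times> (real \<Rightarrow> 'a) \<Rightarrow> ennreal"
    assume u0: "0 \<le> u" and Tfin: "finite T" and Tsub: "T \<subseteq> {0..u}" and \<Psi>: "\<Psi> \<in> borel_measurable (PiM T (\<lambda>_. borel) \<Otimes>\<^sub>M PS)"
    have TS: "T \<subseteq> {0..}" using Tsub by auto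
    define E where "E \<omega> = \<Psi> (restrict (\<lambda>t. B t \<omega>) T, restrict (\<lambda>t. B' t \<omega>) {0..})" for \<omega>
    have Em: "E \<in> borel_measurable M"
      unfolding E_def by (rule measurable_compose[OF _ \<Psi>]) (use restrict_meas[OF TS] restrict_meas[of "{0..}"] in measurable)
    define H where "H p = E (fst p) * (ennreal (fB \<beta> (fst p) (snd p)) * Fu \<beta> (snd p) (fst p) ^ n * indicator {u..} (snd p))" for p
    have i1: "(\<lambda>p::'w \<times> real. indicator {u..} (snd p) :: ennreal) \<in> borel_measurable (M \<Otimes>\<^sub>M lborel)"
      by (rule measurable_compose[OF measurable_snd]) simp
    have H0m: "(\<lambda>p. ennreal (fB \<beta> (fst p) (snd p)) * Fu \<beta> (snd p) (fst p) ^ n * indicator {u..} (snd p)) \<in> borel_measurable (M \<Otimes>\<^sub>M lborel)"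
      by (intro borel_measurable_times_ennreal ennreal_pow_meas fB_joint Fu_joint i1)
    have Hm: "H \<in> borel_measurable (M \<Otimes>\<^sub>M lborel)"
      unfolding H_def
      by (intro borel_measurable_times_ennreal ennreal_pow_meas measurable_compose[OF measurable_fst Em]
          fB_joint Fu_joint i1)
    have "(\<integral>\<^sup>+\<omega>. E \<omega> * Fu \<beta> u \<omega> ^ Suc n \<partial>M)
        \<le> (\<integral>\<^sup>+\<omega>. E \<omega> * (ennreal (real (Suc n)) * (\<integral>\<^sup>+r. ennreal (fB \<beta> \<omega> r) * Fu \<beta> r \<omega> ^ n * indicator {u..} r \<partial>lborel)) \<partial>M)"
    proof (intro nn_integral_mono mult_left_mono)
      fix \<omega> assume w: "\<omega> \<in> space M"
      show "Fu \<beta> u \<omega> ^ Suc n \<le> ennreal (real (Suc n)) * (\<integral>\<^sup>+r. ennreal (fB \<beta> \<omega> r) * Fu \<beta> r \<omega> ^ n * indicator {u..} r \<partial>lborel)"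
        unfolding Fu_def
        by (rule pathwise_bound[OF fB_cont[OF w]]) (simp add: fB_def hb_nonneg)
    qed simp
    also have "\<dots> = ennreal (real (Suc n)) * (\<integral>\<^sup>+\<omega>. \<integral>\<^sup>+r. H (\<omega>, r) \<partial>lborel \<partial>M)"
    proof -
      have "(\<integral>\<^sup>+\<omega>. E \<omega> * (ennreal (real (Suc n)) * (\<integral>\<^sup>+r. ennreal (fB \<beta> \<omega> r) * Fu \<beta> r \<omega> ^ n * indicator {u..} r \<partial>lborel)) \<partial>M)
          = (\<integral>\<^sup>+\<omega>. ennreal (real (Suc n)) * (\<integral>\<^sup>+r. H (\<omega>, r) \<partial>lborel) \<partial>M)"
      proof (rule nn_integral_cong)
        fix \<omega> assume w: "\<omega> \<in> space M"
        have hm: "(\<lambda>r. ennreal (fB \<beta> \<omega> r) * Fu \<beta> r \<omega> ^ n * indicator {u..} r) \<in> borel_measurable lborel"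
          using measurable_Pair2[OF H0m w] by simp
        show "E \<omega> * (ennreal (real (Suc n)) * (\<integral>\<^sup>+r. ennreal (fB \<beta> \<omega> r) * Fu \<beta> r \<omega> ^ n * indicator {u..} r \<partial>lborel))
            = ennreal (real (Suc n)) * (\<integral>\<^sup>+r. H (\<omega>, r) \<partial>lborel)"
        proof -
          have "(\<integral>\<^sup>+r. H (\<omega>, r) \<partial>lborel) = E \<omega> * (\<integral>\<^sup>+r. ennreal (fB \<beta> \<omega> r) * Fu \<beta> r \<omega> ^ n * indicator {u..} r \<partial>lborel)"
            unfolding H_def by (simp only: fst_conv snd_conv) (rule nn_integral_cmult[OF hm])
          then show ?thesis by (simp only:) (rule mult.left_commute)
        qed
      qed
      also have "\<dots> = ennreal (real (Suc n)) * (\<integral>\<^sup>+\<omega>. \<integral>\<^sup>+r. H (\<omega>, r) \<partial>lborel \<partial>M)"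
        by (rule nn_integral_cmult) (rule lborel.borel_measurable_nn_integral, simp add: Hm)
      finally show ?thesis .
    qed
    also have "(\<integral>\<^sup>+\<omega>. \<integral>\<^sup>+r. H (\<omega>, r) \<partial>lborel \<partial>M) = (\<integral>\<^sup>+r. \<integral>\<^sup>+\<omega>. H (\<omega>, r) \<partial>M \<partial>lborel)"
    proof -
      interpret pair_sigma_finite M lborel ..
      show ?thesis using Fubini'[of "\<lambda>\<omega> r. H (\<omega>, r)"] Hm by simp
    qed
    also have "(\<integral>\<^sup>+r. \<integral>\<^sup>+\<omega>. H (\<omega>, r) \<partial>M \<partial>lborel)
        \<le> (\<integral>\<^sup>+r. ennreal (fact n * ?K ^ n) * (ennreal (phi \<beta> DIM('a) (r - u)) * (\<integral>\<^sup>+\<omega>. E \<omega> \<partial>M)) * indicator {u..} r \<partial>lborel)"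
    proof (intro nn_integral_mono)
      fix r :: real
      show "(\<integral>\<^sup>+\<omega>. H (\<omega>, r) \<partial>M) \<le> ennreal (fact n * ?K ^ n) * (ennreal (phi \<beta> DIM('a) (r - u)) * (\<integral>\<^sup>+\<omega>. E \<omega> \<partial>M)) * indicator {u..} r"
      proof (cases "u \<le> r")
        case False
        then show ?thesis by (simp add: H_def)
      next
        case True
        have r0: "0 \<le> r" using u0 True by simp
        define T' where "T' = insert r T"
        define \<Psi>' where "\<Psi>' p = \<Psi> (restrict (fst p) T, snd p) * ennreal (hb \<beta> (fst p r - snd p r))" for p :: "(real \<Rightarrow> 'a) \<times> (real \<Rightarrow> 'a)"
        have \<Psi>'m: "\<Psi>' \<in> borel_measurable (PiM T' (\<lambda>_. borel) \<Otimes>\<^sub>M PS)"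
        proof -
          have p1: "(\<lambda>p::(real \<Rightarrow> 'a) \<times> (real \<Rightarrow> 'a). (restrict (fst p) T, snd p)) \<in> measurable (PiM T' (\<lambda>_. borel) \<Otimes>\<^sub>M PS) (PiM T (\<lambda>_. borel) \<Otimes>\<^sub>M PS)"
            by (intro measurable_Pair measurable_compose[OF measurable_fst measurable_restrict_subset] measurable_snd) (auto simp: T'_def)
          have c1: "(\<lambda>p::(real \<Rightarrow> 'a) \<times> (real \<Rightarrow> 'a). fst p r) \<in> borel_measurable (PiM T' (\<lambda>_. borel) \<Otimes>\<^sub>M PS)"
            by (rule measurable_compose[OF measurable_fst measurable_component_singleton]) (simp add: T'_def)
          have c2: "(\<lambda>p::(real \<Rightarrow> 'a) \<times> (real \<Rightarrow> 'a). snd p r) \<in> borel_measurable (PiM T' (\<lambda>_. borel) \<Otimes>\<^sub>M PS)"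
            by (rule measurable_compose[OF measurable_snd measurable_component_singleton]) (simp add: r0)
          show ?thesis unfolding \<Psi>'_def
            by (intro borel_measurable_times_ennreal measurable_compose[OF p1 \<Psi>] measurable_compose[OF _ measurable_ennreal]
                measurable_compose[OF _ hb_meas] borel_measurable_diff c1 c2)
        qed
        have E': "\<Psi>' (restrict (\<lambda>t. B t \<omega>) T', restrict (\<lambda>t. B' t \<omega>) {0..}) = E \<omega> * ennreal (hb \<beta> (B r \<omega> - B' r \<omega>))" for \<omega>
        proof -
          have "T' \<inter> T = T" by (auto simp: T'_def)
          then show ?thesis using r0 by (simp add: \<Psi>'_def E_def T'_def)
        qed
        have IH: "(\<integral>\<^sup>+\<omega>. \<Psi>' (restrict (\<lambda>t. B t \<omega>) T', restrict (\<lambda>t. B' t \<omega>) {0..}) * Fu \<beta> r \<omega> ^ n \<partial>M)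
           \<le> ennreal (fact n * ?K ^ n) * (\<integral>\<^sup>+\<omega>. \<Psi>' (restrict (\<lambda>t. B t \<omega>) T', restrict (\<lambda>t. B' t \<omega>) {0..}) \<partial>M)"
        proof -
          have T'fin: "finite T'" using Tfin by (simp add: T'_def)
          have T'sub: "T' \<subseteq> {0..r}" using Tsub True r0 by (auto simp: T'_def)
          show ?thesis by (rule Suc.IH[rule_format, OF r0 T'fin T'sub \<Psi>'m])
        qed
        have sb: "(\<integral>\<^sup>+\<omega>. E \<omega> * ennreal (hb \<beta> (B r \<omega> - B' r \<omega>)) \<partial>M) \<le> ennreal (phi \<beta> DIM('a) (r - u)) * (\<integral>\<^sup>+\<omega>. E \<omega> \<partial>M)"
        proof (cases "r = u")
          case True
          have "(\<integral>\<^sup>+\<omega>. E \<omega> * ennreal (hb \<beta> (B r \<omega> - B' r \<omega>)) \<partial>M) \<le> (\<integral>\<^sup>+\<omega>. E \<omega> \<partial>M)"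
          proof (intro nn_integral_mono)
            fix \<omega>
            have "ennreal (hb \<beta> (B r \<omega> - B' r \<omega>)) \<le> ennreal 1"
              using hb_le1[of \<beta>] b by (intro ennreal_leI) auto
            then have "E \<omega> * ennreal (hb \<beta> (B r \<omega> - B' r \<omega>)) \<le> E \<omega> * 1"
              by (intro mult_left_mono) auto
            then show "E \<omega> * ennreal (hb \<beta> (B r \<omega> - B' r \<omega>)) \<le> E \<omega>" by simp
          qed
          then show ?thesis using True by (simp add: phi_def)
        next
          case False
          then have ur: "u < r" using \<open>u \<le> r\<close> by simp
          define T'' where "T'' = insert u T"
          define \<Psi>'' where "\<Psi>'' p = \<Psi> (restrict (fst p) T, snd p)" for p :: "(real \<Rightarrow> 'a) \<times> (real \<Rightarrow> 'a)"
          have \<Psi>''m: "\<Psi>'' \<in> borel_measurable (PiM T'' (\<lambda>_. borel) \<Otimes>\<^sub>M PS)"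
          proof -
            have p1: "(\<lambda>p::(real \<Rightarrow> 'a) \<times> (real \<Rightarrow> 'a). (restrict (fst p) T, snd p)) \<in> measurable (PiM T'' (\<lambda>_. borel) \<Otimes>\<^sub>M PS) (PiM T (\<lambda>_. borel) \<Otimes>\<^sub>M PS)"
              by (intro measurable_Pair measurable_compose[OF measurable_fst measurable_restrict_subset] measurable_snd) (auto simp: T''_def)
            show ?thesis unfolding \<Psi>''_def by (rule measurable_compose[OF p1 \<Psi>])
          qed
          have E'': "\<Psi>'' (restrict (\<lambda>t. B t \<omega>) T'', restrict (\<lambda>t. B' t \<omega>) {0..}) = E \<omega>" for \<omega>
          proof -
            have "T'' \<inter> T = T" by (auto simp: T''_def)
            then show ?thesis by (simp add: \<Psi>''_def E_def T''_def)
          qed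
          have T''fin: "finite T''" using Tfin by (simp add: T''_def)
          have T''sub: "T'' \<subseteq> {0..u}" using Tsub u0 by (auto simp: T''_def)
          have uT'': "u \<in> T''" by (simp add: T''_def)
          show ?thesis
            using step_bound[OF u0 ur T''fin T''sub uT'' _ _ \<Psi>''m, of \<beta>] b unfolding E'' by simp
        qed
        have "(\<integral>\<^sup>+\<omega>. H (\<omega>, r) \<partial>M) = (\<integral>\<^sup>+\<omega>. \<Psi>' (restrict (\<lambda>t. B t \<omega>) T', restrict (\<lambda>t. B' t \<omega>) {0..}) * Fu \<beta> r \<omega> ^ n \<partial>M)"
          using True r0 by (intro nn_integral_cong) (simp add: H_def E' fB_def mult_ac)
        also have "\<dots> \<le> ennreal (fact n * ?K ^ n) * (\<integral>\<^sup>+\<omega>. E \<omega> * ennreal (hb \<beta> (B r \<omega> - B' r \<omega>)) \<partial>M)"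
          using IH by (simp add: E')
        also have "\<dots> \<le> ennreal (fact n * ?K ^ n) * (ennreal (phi \<beta> DIM('a) (r - u)) * (\<integral>\<^sup>+\<omega>. E \<omega> \<partial>M))"
          by (intro mult_left_mono sb) simp
        finally show ?thesis using True by simp
      qed
    qed
    also have "\<dots> = ennreal (fact n * ?K ^ n) * (\<integral>\<^sup>+\<omega>. E \<omega> \<partial>M) * (\<integral>\<^sup>+r. ennreal (phi \<beta> DIM('a) (r - u)) * indicator {u..} r \<partial>lborel)"
    proof -
      have pm: "(\<lambda>r. ennreal (phi \<beta> DIM('a) (r - u)) * indicator {u..} r) \<in> borel_measurable lborel" by measurable
      have "(\<lambda>r. ennreal (fact n * ?K ^ n) * (ennreal (phi \<beta> DIM('a) (r - u)) * (\<integral>\<^sup>+\<omega>. E \<omega> \<partial>M)) * indicator {u..} r)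
          = (\<lambda>r. (ennreal (fact n * ?K ^ n) * (\<integral>\<^sup>+\<omega>. E \<omega> \<partial>M)) * (ennreal (phi \<beta> DIM('a) (r - u)) * indicator {u..} r))"
        by (simp add: fun_eq_iff mult_ac)
      then show ?thesis by (simp only: nn_integral_cmult[OF pm])
    qed
    also have "\<dots> \<le> ennreal (fact n * ?K ^ n) * (\<integral>\<^sup>+\<omega>. E \<omega> \<partial>M) * ennreal ?K"
      by (intro mult_left_mono phi_shift_int) (use b in auto)
    finally have "(\<integral>\<^sup>+\<omega>. E \<omega> * Fu \<beta> u \<omega> ^ Suc n \<partial>M)
        \<le> ennreal (real (Suc n)) * (ennreal (fact n * ?K ^ n) * (\<integral>\<^sup>+\<omega>. E \<omega> \<partial>M) * ennreal ?K)"
      by (simp add: mult_left_mono)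
    also have "\<dots> = ennreal (fact (Suc n) * ?K ^ Suc n) * (\<integral>\<^sup>+\<omega>. E \<omega> \<partial>M)"
    proof -
      have a: "0 \<le> fact n * ?K ^ n" using K0 by simp
      have "ennreal (real (Suc n)) * (ennreal (fact n * ?K ^ n) * (\<integral>\<^sup>+\<omega>. E \<omega> \<partial>M) * ennreal ?K)
          = (ennreal (real (Suc n)) * ennreal (fact n * ?K ^ n) * ennreal ?K) * (\<integral>\<^sup>+\<omega>. E \<omega> \<partial>M)"
        by (simp add: mult_ac)
      also have "ennreal (real (Suc n)) * ennreal (fact n * ?K ^ n) * ennreal ?K = ennreal (real (Suc n) * (fact n * ?K ^ n) * ?K)"
        using a K0 by (simp add: ennreal_mult)
      also have "real (Suc n) * (fact n * ?K ^ n) * ?K = fact (Suc n) * ?K ^ Suc n"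
        by (simp add: algebra_simps)
      finally show ?thesis .
    qed
    finally show "(\<integral>\<^sup>+\<omega>. \<Psi> (restrict (\<lambda>t. B t \<omega>) T, restrict (\<lambda>t. B' t \<omega>) {0..}) * Fu \<beta> u \<omega> ^ Suc n \<partial>M)
     \<le> ennreal (fact (Suc n) * ?K ^ Suc n) * (\<integral>\<^sup>+\<omega>. \<Psi> (restrict (\<lambda>t. B t \<omega>) T, restrict (\<lambda>t. B' t \<omega>) {0..}) \<partial>M)"
      unfolding E_def .
  qed
qed

end


definition expE :: "ennreal \<Rightarrow> ennreal" where
  "expE z = (\<Sum>n. ennreal (1 / fact n) * z ^ n)"

lemma expE_mono: "a \<le> b \<Longrightarrow> expE a \<le> expE b"
  unfolding expE_def by (intro suminf_le mult_left_mono power_mono_ennreal) auto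

lemma exp_series_ennreal:
  assumes "0 \<le> p"
  shows "(\<Sum>n. ennreal (1 / fact n) * ennreal p ^ n) = ennreal (exp p)"
proof -
  have "(\<Sum>n. ennreal (1 / fact n) * ennreal p ^ n) = (\<Sum>n. ennreal (p ^ n / fact n))"
    using assms by (intro suminf_cong) (simp add: ennreal_power ennreal_mult'[symmetric])
  also have "\<dots> = ennreal (\<Sum>n. p ^ n / fact n)"
  proof (rule suminf_ennreal2)
    show "summable (\<lambda>n. p ^ n / fact n)" using summable_exp_generic[of p] by (simp add: divide_inverse mult.commute)
  qed (use assms in auto)
  also have "(\<Sum>n. p ^ n / fact n) = exp p"
    by (simp add: exp_def divide_inverse mult.commute)
  finally show ?thesis .
qed

lemma ereal_exp_enn2ereal: "ereal_exp (enn2ereal z) = expE z"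
proof (cases z)
  case (real p)
  then show ?thesis by (simp add: ereal_exp_def expE_def enn2ereal_ennreal exp_series_ennreal)
next
  case top
  have "ennreal (1 / fact 1) * top ^ 1 \<le> expE top"
    unfolding expE_def by (rule ennreal_term_le_suminf)
  then have "expE top = top" by (simp add: top_unique)
  then show ?thesis using top by (simp add: ereal_exp_def)
qed

lemma ereal_exp_mono: "a \<le> b \<Longrightarrow> ereal_exp a \<le> ereal_exp b"
  by (cases a; cases b) (auto simp: ereal_exp_def intro: ennreal_leI)

lemma ereal_minus_le_enn: "(enn2ereal P - enn2ereal N) \<le> enn2ereal P"
  using enn2ereal_nonneg[of N] by (cases "enn2ereal P"; cases "enn2ereal N") auto

context bmctx
begin

lemma Fu0_meas: "Fu \<beta> 0 \<in> borel_measurable M"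
proof -
  have "(\<lambda>\<omega>. (\<omega>, 0::real)) \<in> measurable M (M \<Otimes>\<^sub>M lborel)" by (rule measurable_Pair2') simp
  from measurable_compose[OF this Fu_joint[of \<beta>]] show ?thesis by simp
qed

lemma exp_moment:
  assumes b: "2 < \<beta>" "\<beta> < real DIM('a)" and l: "0 \<le> l" "l * Kc \<beta> DIM('a) \<le> 1/2"
  shows "(\<integral>\<^sup>+\<omega>. expE (ennreal l * Fu \<beta> 0 \<omega>) \<partial>M) \<le> 2"
proof -
  let ?K = "Kc \<beta> DIM('a)"
  have K0: "0 < ?K" using Kc_pos b by simp
  have mom: "(\<integral>\<^sup>+\<omega>. Fu \<beta> 0 \<omega> ^ n \<partial>M) \<le> ennreal (fact n * ?K ^ n)" for n
    using moment_bound[OF b, of n, rule_format, of 0 "{}" "\<lambda>_. 1"] by (simp add: emeasure_space_1)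
  have "(\<integral>\<^sup>+\<omega>. expE (ennreal l * Fu \<beta> 0 \<omega>) \<partial>M) = (\<Sum>n. \<integral>\<^sup>+\<omega>. ennreal (1 / fact n) * (ennreal l * Fu \<beta> 0 \<omega>) ^ n \<partial>M)"
    unfolding expE_def
    by (rule nn_integral_suminf) (intro borel_measurable_times_ennreal borel_measurable_const ennreal_pow_meas Fu0_meas)
  also have "\<dots> \<le> (\<Sum>n. ennreal ((l * ?K) ^ n))"
  proof (intro suminf_le allI)
    fix n
    have "(\<integral>\<^sup>+\<omega>. ennreal (1 / fact n) * (ennreal l * Fu \<beta> 0 \<omega>) ^ n \<partial>M)
        = (ennreal (1 / fact n) * ennreal (l ^ n)) * (\<integral>\<^sup>+\<omega>. Fu \<beta> 0 \<omega> ^ n \<partial>M)"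
    proof -
      have "(\<lambda>\<omega>. ennreal (1 / fact n) * (ennreal l * Fu \<beta> 0 \<omega>) ^ n) = (\<lambda>\<omega>. (ennreal (1 / fact n) * ennreal (l ^ n)) * Fu \<beta> 0 \<omega> ^ n)"
        by (simp only: power_mult_distrib ennreal_power[OF l(1)] mult.assoc)
      then show ?thesis by (simp only: nn_integral_cmult[OF ennreal_pow_meas[OF Fu0_meas]])
    qed
    also have "\<dots> \<le> (ennreal (1 / fact n) * ennreal (l ^ n)) * ennreal (fact n * ?K ^ n)"
      by (intro mult_left_mono mom) simp
    also have "\<dots> = ennreal ((l * ?K) ^ n)"
    proof -
      have "(ennreal (1 / fact n) * ennreal (l ^ n)) * ennreal (fact n * ?K ^ n) = ennreal ((1 / fact n * l ^ n) * (fact n * ?K ^ n))"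
      proof -
        have a: "0 \<le> 1 / (fact n :: real)" by simp
        have bb: "0 \<le> l ^ n" using l by simp
        have c: "0 \<le> fact n * ?K ^ n" using K0 by simp
        show ?thesis
          by (simp only: ennreal_mult[symmetric, OF a bb] ennreal_mult[symmetric, OF mult_nonneg_nonneg[OF a bb] c])
      qed
      also have "(1 / fact n * l ^ n) * (fact n * ?K ^ n) = (l * ?K) ^ n"
        by (simp add: power_mult_distrib)
      finally show ?thesis .
    qed
    finally show "(\<integral>\<^sup>+\<omega>. ennreal (1 / fact n) * (ennreal l * Fu \<beta> 0 \<omega>) ^ n \<partial>M) \<le> ennreal ((l * ?K) ^ n)" .
  qed simp_all
  also have "\<dots> \<le> (\<Sum>n. ennreal ((1/2) ^ n))"
    using l K0 by (intro suminf_le allI ennreal_leI power_mono) auto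
  also have "\<dots> = ennreal (\<Sum>n. (1/2::real) ^ n)"
    by (rule suminf_ennreal2) (auto intro: summable_geometric)
  also have "(\<Sum>n. (1/2::real) ^ n) = 2" using suminf_geometric[of "1/2::real"] by simp
  finally show ?thesis by simp
qed

end


lemma g_pointwise:
  fixes a b :: "'a::euclidean_space"
  assumes g: "gv \<le> \<epsilon> * (if a = b then 1 else min (norm (a - b) powr (- \<alpha>)) 1)"
    and ba: "\<beta> \<le> \<alpha>" and b0: "0 < \<beta>"
  shows "max gv 0 \<le> max \<epsilon> 0 * hb \<beta> (a - b)"
proof -
  define v where "v = (if a = b then 1 else min (norm (a - b) powr (- \<alpha>)) 1)"
  have v0: "0 \<le> v" by (simp add: v_def)
  have vh: "v \<le> hb \<beta> (a - b)"
  proof (cases "a = b")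
    case True then show ?thesis by (simp add: v_def hb_def)
  next
    case False
    show ?thesis
    proof (cases "norm (a - b) \<le> 1")
      case True
      then have "hb \<beta> (a - b) = 1" by (simp add: hb_def max_def)
      then show ?thesis using False by (simp add: v_def)
    next
      case n1: False
      have "norm (a - b) powr (- \<alpha>) \<le> norm (a - b) powr (- \<beta>)"
        using n1 ba by (intro powr_mono) auto
      moreover have "v = min (norm (a - b) powr (- \<alpha>)) 1" using False by (simp add: v_def)
      moreover have "hb \<beta> (a - b) = norm (a - b) powr (- \<beta>)" using n1 by (simp add: hb_def max_def)
      ultimately show ?thesis by (metis min.cobounded1 order_trans)
    qed
  qed
  have "gv \<le> \<epsilon> * v" using g by (simp add: v_def)
  also have "\<dots> \<le> max \<epsilon> 0 * v" using v0 by (intro mult_right_mono) auto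
  also have "\<dots> \<le> max \<epsilon> 0 * hb \<beta> (a - b)" using vh by (intro mult_left_mono) auto
  finally show ?thesis using hb_nonneg[of \<beta> "a - b"] by (simp add: max_def)
qed

theorem lemma1p1:
  fixes \<alpha> q :: real
  assumes "\<alpha> > 2" and "q > 0" and "DIM('a::euclidean_space) \<ge> 3"
  shows "\<exists>c>0. \<forall>\<epsilon>::real. \<epsilon> \<le> c \<longrightarrow>
    (\<forall>g :: 'a \<times> 'a \<Rightarrow> real.
       g \<in> borel_measurable borel \<longrightarrow>
       (\<forall>x y. g (x, y) \<le> \<epsilon> * (if x = y then 1 else min (norm (x - y) powr (- \<alpha>)) 1)) \<longrightarrow>
       (\<forall>(M :: 'w measure) (B :: real \<Rightarrow> 'w \<Rightarrow> 'a) (B' :: real \<Rightarrow> 'w \<Rightarrow> 'a) x y.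
          is_BM M B x \<and> is_BM M B' y \<and> indep_processes M B B' \<longrightarrow>
          (\<integral>\<^sup>+ \<omega>. ereal_exp (ereal q * ext_integral_0_inf (\<lambda>s. g (B s \<omega>, B' s \<omega>))) \<partial>M) \<le> 2))"
proof -
  define \<beta> where "\<beta> = min \<alpha> (5/2)"
  have b: "2 < \<beta>" "\<beta> < real DIM('a)" "\<beta> \<le> \<alpha>" using assms by (auto simp: \<beta>_def)
  define K where "K = Kc \<beta> DIM('a)"
  have K0: "0 < K" using Kc_pos b by (simp add: K_def)
  define c where "c = 1 / (2 * q * K)"
  have c0: "0 < c" using K0 assms by (simp add: c_def)
  show ?thesis
  proof (intro exI[of _ c] conjI c0 allI impI)
    fix \<epsilon> :: real and g :: "'a \<times> 'a \<Rightarrow> real" and M :: "'w measure" and B B' :: "real \<Rightarrow> 'w \<Rightarrow> 'a" and x y :: 'a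
    assume eps: "\<epsilon> \<le> c" and gm: "g \<in> borel_measurable borel"
      and gb: "\<forall>x y. g (x, y) \<le> \<epsilon> * (if x = y then 1 else min (norm (x - y) powr (- \<alpha>)) 1)"
      and H: "is_BM M B x \<and> is_BM M B' y \<and> indep_processes M B B'"
    interpret bmctx M B B' x y using H by unfold_locales auto
    define \<epsilon>' where "\<epsilon>' = max \<epsilon> 0"
    define l where "l = q * \<epsilon>'"
    have e0: "0 \<le> \<epsilon>'" by (simp add: \<epsilon>'_def)
    have l0: "0 \<le> l" using assms e0 by (simp add: l_def)
    have lK: "l * K \<le> 1/2"
    proof -
      have "\<epsilon>' \<le> c" using eps c0 by (simp add: \<epsilon>'_def)
      then have "l * K \<le> q * c * K" using assms K0 by (simp add: l_def mult_right_mono)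
      also have "q * c * K = 1/2" using assms K0 by (simp add: c_def field_simps)
      finally show ?thesis .
    qed
    have pw: "ereal_exp (ereal q * ext_integral_0_inf (\<lambda>s. g (B s \<omega>, B' s \<omega>))) \<le> expE (ennreal l * Fu \<beta> 0 \<omega>)"
      if w: "\<omega> \<in> space M" for \<omega>
    proof -
      define P where "P = (\<integral>\<^sup>+s. ennreal (max (g (B s \<omega>, B' s \<omega>)) 0) * indicator {0..} s \<partial>lborel)"
      define N where "N = (\<integral>\<^sup>+s. ennreal (max (- g (B s \<omega>, B' s \<omega>)) 0) * indicator {0..} s \<partial>lborel)"
      have ext: "ext_integral_0_inf (\<lambda>s. g (B s \<omega>, B' s \<omega>)) = enn2ereal P - enn2ereal N"
        unfolding ext_integral_0_inf_def P_def N_def ..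
      have fm: "(\<lambda>s. ennreal (fB \<beta> \<omega> s)) \<in> borel_measurable lborel"
        using borel_measurable_continuous_onI[OF fB_cont[OF w]] by simp
      have PF: "P \<le> ennreal \<epsilon>' * Fu \<beta> 0 \<omega>"
      proof -
        have "P \<le> (\<integral>\<^sup>+s. ennreal \<epsilon>' * (ennreal (fB \<beta> \<omega> s) * indicator {0..} s) \<partial>lborel)"
          unfolding P_def
        proof (intro nn_integral_mono)
          fix s :: real
          show "ennreal (max (g (B s \<omega>, B' s \<omega>)) 0) * indicator {0..} s \<le> ennreal \<epsilon>' * (ennreal (fB \<beta> \<omega> s) * indicator {0..} s)"
          proof (cases "0 \<le> s")
            case True
            have "max (g (B s \<omega>, B' s \<omega>)) 0 \<le> \<epsilon>' * fB \<beta> \<omega> s"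
              using g_pointwise[OF gb[rule_format, of "B s \<omega>" "B' s \<omega>"] b(3)] b True
              by (simp add: \<epsilon>'_def fB_def max_def)
            then have "ennreal (max (g (B s \<omega>, B' s \<omega>)) 0) \<le> ennreal \<epsilon>' * ennreal (fB \<beta> \<omega> s)"
              using e0 by (simp add: ennreal_mult'[symmetric] ennreal_leI)
            then show ?thesis using True by simp
          qed simp
        qed
        also have "\<dots> = ennreal \<epsilon>' * Fu \<beta> 0 \<omega>"
          unfolding Fu_def by (rule nn_integral_cmult) (use fm in measurable)
        finally show ?thesis .
      qed
      have "ereal q * ext_integral_0_inf (\<lambda>s. g (B s \<omega>, B' s \<omega>)) \<le> ereal q * enn2ereal P"
        unfolding ext using assms by (intro ereal_mult_left_mono ereal_minus_le_enn) auto
      also have "ereal q * enn2ereal P = enn2ereal (ennreal q * P)"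
        using assms by (simp add: times_ennreal.rep_eq enn2ereal_ennreal)
      finally have "ereal_exp (ereal q * ext_integral_0_inf (\<lambda>s. g (B s \<omega>, B' s \<omega>))) \<le> expE (ennreal q * P)"
        using ereal_exp_mono ereal_exp_enn2ereal by metis
      also have "\<dots> \<le> expE (ennreal l * Fu \<beta> 0 \<omega>)"
      proof (rule expE_mono)
        have "ennreal q * P \<le> ennreal q * (ennreal \<epsilon>' * Fu \<beta> 0 \<omega>)" by (intro mult_left_mono PF) simp
        also have "\<dots> = ennreal l * Fu \<beta> 0 \<omega>"
          using assms e0 by (simp add: l_def ennreal_mult mult.assoc)
        finally show "ennreal q * P \<le> ennreal l * Fu \<beta> 0 \<omega>" .
      qed
      finally show ?thesis .
    qed
    have "(\<integral>\<^sup>+\<omega>. ereal_exp (ereal q * ext_integral_0_inf (\<lambda>s. g (B s \<omega>, B' s \<omega>))) \<partial>M) \<le> (\<integral>\<^sup>+\<omega>. expE (ennreal l * Fu \<beta> 0 \<omega>) \<partial>M)"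
      by (intro nn_integral_mono pw)
    also have "\<dots> \<le> 2"
      by (rule exp_moment) (use b l0 lK in \<open>auto simp: K_def\<close>)
    finally show "(\<integral>\<^sup>+\<omega>. ereal_exp (ereal q * ext_integral_0_inf (\<lambda>s. g (B s \<omega>, B' s \<omega>))) \<partial>M) \<le> 2" .
  qed
qed


end
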